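(* Consider the draining problem described in the context. Let $u^\ast$ be an optimal control with optimal cost $T^\ast$ and uncertainty trajectory $R^\ast$, and assume there exists a nonempty open interval $(t_1,t_2)$ such that $R^\ast(t)=0$ for all $t\in(t_1,t_2)$. Then $T^\ast=\|s^\psi-s^\varphi\|$ and $$u^\ast(t)=\frac{s^\psi-s^\varphi}{T^\ast}\quad\text{for all }t\in[0,T^\ast].$$
   Context: $\|\cdot\|$ is the Euclidean norm. A single target sits at the fixed position $x\in\mathbb{R}^2$, with sensing range $r>0$ and constants $A,B$ with $B>A$. The agent has position $s(t)\in\mathbb{R}^2$ with dynamics $\dot s(t)=u(t)$ and control constraint $\|u(t)\|\le 1$. Define $p(s)=\max\{0,\,1-\|s-x\|^2/r^2\}$ and $f_R(R,s)=0$ if $R=0$ and $A-Bp(s)<0$, and $f_R(R,s)=A-Bp(s)$ otherwise. Given entrance point $s^\varphi$, departure point $s^\psi$ (points where the agent starts/stops sensing the target) and arrival uncertainty $\check R$, the draining problem is: minimize $T$ over $T$ and controls $u:[0,T]\to\mathbb{R}^2$ subject to $\dot s=u$, $\dot R=f_R(R,s)$, $\|u(t)\|^2\le1$, $\min_{\tau\in[0,T]}R(\tau)=0$, $s(0)=s^\varphi$, $s(T)=s^\psi$, $R(0)=\check R$. An optimal control is a minimizer. *)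

theory Defs
  imports "HOL-Analysis.Analysis"
begin

type_synonym pt = "real ^ 2"

definition sens_p :: "pt \<Rightarrow> real \<Rightarrow> pt \<Rightarrow> real" where
  "sens_p x r s = max 0 (1 - (norm (s - x))\<^sup>2 / r\<^sup>2)"

definition f_R :: "real \<Rightarrow> real \<Rightarrow> pt \<Rightarrow> real \<Rightarrow> real \<Rightarrow> pt \<Rightarrow> real" where
  "f_R A B x r R s =
     (if R = 0 \<and> A - B * sens_p x r s < 0 then 0 else A - B * sens_p x r s)"

text \<open>The state equation
  for s is understood classically (derivative u(t) at every t in [0,T]); the
  state equation for R (discontinuous right-hand side) is understood in
  integral (Caratheodory) form R(t) = R(0) + integral_0^t f_R(R,s).\<close>
definition draining_feasible ::
  "real \<Rightarrow> real \<Rightarrow> pt \<Rightarrow> real \<Rightarrow> pt \<Rightarrow> pt \<Rightarrow> real \<Rightarrow>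
   real \<Rightarrow> (real \<Rightarrow> pt) \<Rightarrow> (real \<Rightarrow> pt) \<Rightarrow> (real \<Rightarrow> real) \<Rightarrow> bool" where
  "draining_feasible A B x r s_phi s_psi R0 T u s R \<longleftrightarrow>
     0 \<le> T \<and>
     (\<forall>t\<in>{0..T}. (s has_vector_derivative u t) (at t within {0..T})) \<and>
     (\<forall>t\<in>{0..T}. ((\<lambda>\<tau>. f_R A B x r (R \<tau>) (s \<tau>)) has_integral (R t - R 0)) {0..t}) \<and>
     (\<forall>t\<in>{0..T}. (norm (u t))\<^sup>2 \<le> 1) \<and>
     (\<forall>\<tau>\<in>{0..T}. 0 \<le> R \<tau>) \<and> (\<exists>\<tau>\<in>{0..T}. R \<tau> = 0) \<and>
     s 0 = s_phi \<and> s T = s_psi \<and> R 0 = R0"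

definition draining_optimal ::
  "real \<Rightarrow> real \<Rightarrow> pt \<Rightarrow> real \<Rightarrow> pt \<Rightarrow> pt \<Rightarrow> real \<Rightarrow>
   real \<Rightarrow> (real \<Rightarrow> pt) \<Rightarrow> (real \<Rightarrow> pt) \<Rightarrow> (real \<Rightarrow> real) \<Rightarrow> bool" where
  "draining_optimal A B x r s_phi s_psi R0 T u s R \<longleftrightarrow>
     draining_feasible A B x r s_phi s_psi R0 T u s R \<and>
     (\<forall>T' u' s' R'. draining_feasible A B x r s_phi s_psi R0 T' u' s' R' \<longrightarrow> T \<le> T')"

end

theory Submission
  imports Defs
begin
lemma countable_deriv0_le:
  fixes H :: "real \<Rightarrow> real"
  assumes ab: "a \<le> b" and cont: "continuous_on {a..b} H" and K: "countable K"
    and der: "\<And>x. x \<in> {a<..<b} - K \<Longrightarrow> (H has_real_derivative 0) (at x)"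
  shows "H b \<le> H a"
proof (rule ccontr)
  assume "\<not> H b \<le> H a"
  hence lt: "H a < H b" by simp
  have ab': "a < b" using ab lt by (cases "a = b") auto
  define d where "d = H b - H a"
  have d: "d > 0" using lt d_def by simp
  define \<epsilon> where "\<epsilon> = d / (2 * (b - a))"
  have eps: "\<epsilon> > 0" using d ab' by (simp add: \<epsilon>_def)
  define \<phi> where "\<phi> x = H x - H a - \<epsilon> * (x - a)" for x
  have \<phi>a: "\<phi> a = 0" by (simp add: \<phi>_def)
  have \<phi>b: "\<phi> b = d/2" using ab' by (simp add: \<phi>_def \<epsilon>_def d_def field_simps)
  have "uncountable {0<..<d/2}" using d by (simp add: uncountable_open_interval)
  moreover have "countable (\<phi> ` K)" using K by simp
  ultimately have "\<not> {0<..<d/2} \<subseteq> \<phi> ` K" using countable_subset by blast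
  then obtain y where y: "y \<in> {0<..<d/2}" "y \<notin> \<phi> ` K" by blast
  have \<phi>cont: "continuous_on {a..b} \<phi>" unfolding \<phi>_def
    by (intro continuous_intros cont)
  define S where "S = {x \<in> {a..b}. \<phi> x = y}"
  obtain x1 where "x1 \<ge> a" "x1 \<le> b" "\<phi> x1 = y"
    using IVT'[of \<phi> a y b] \<phi>a \<phi>b y ab \<phi>cont by auto
  hence Sne: "S \<noteq> {}" by (auto simp: S_def)
  have Scl: "closed S" unfolding S_def
    by (rule continuous_closed_preimage_constant[OF \<phi>cont]) simp
  have Sbdd: "bdd_above S" by (auto simp: S_def bdd_above_def)
  define x0 where "x0 = Sup S"
  have x0S: "x0 \<in> S" using closed_contains_Sup[OF Sne Sbdd Scl] x0_def by simp
  have x0ub: "\<And>x. x \<in> S \<Longrightarrow> x \<le> x0" using Sbdd x0_def by (simp add: cSup_upper)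
  have "x0 \<noteq> a" using x0S \<phi>a y by (auto simp: S_def)
  moreover have "x0 \<noteq> b" using x0S \<phi>b y by (auto simp: S_def)
  ultimately have x0in: "a < x0" "x0 < b" using x0S by (auto simp: S_def)
  have "x0 \<notin> K" using x0S y by (auto simp: S_def)
  hence "(H has_real_derivative 0) (at x0)" using der x0in by auto
  hence "(\<phi> has_real_derivative (0 - 0 - \<epsilon> * (1 - 0))) (at x0)" unfolding \<phi>_def
    by (intro derivative_eq_intros) auto
  hence "(\<phi> has_real_derivative (- \<epsilon>)) (at x0)" by simp
  from DERIV_neg_dec_right[OF this] eps obtain \<delta> where \<delta>: "\<delta> > 0"
    "\<And>h. h > 0 \<Longrightarrow> h < \<delta> \<Longrightarrow> \<phi> (x0 + h) < \<phi> x0" by auto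
  define h where "h = min (\<delta>/2) ((b - x0)/2)"
  have h1: "h \<le> (b - x0)/2" "h \<le> \<delta>/2" unfolding h_def by (rule min.cobounded2, rule min.cobounded1)
  have h: "h > 0" "h < \<delta>" "x0 + h < b" using \<delta> x0in h1 by (auto simp: h_def)
  have "\<phi> (x0 + h) < y" using \<delta>(2)[OF h(1,2)] x0S by (simp add: S_def)
  moreover have "continuous_on {x0+h..b} \<phi>"
    using \<phi>cont x0in h by (auto intro: continuous_on_subset)
  ultimately obtain x2 where "x2 \<ge> x0 + h" "x2 \<le> b" "\<phi> x2 = y"
    using IVT'[of \<phi> "x0+h" y b] \<phi>b y h by force
  hence "x2 \<in> S" using x0in h by (auto simp: S_def)
  with x0ub have "x2 \<le> x0" by auto
  with \<open>x2 \<ge> x0 + h\<close> h show False by simp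
qed

lemma countable_deriv0_eq:
  fixes H :: "real \<Rightarrow> real"
  assumes ab: "a \<le> b" and cont: "continuous_on {a..b} H" and K: "countable K"
    and der: "\<And>x. x \<in> {a<..<b} - K \<Longrightarrow> (H has_real_derivative 0) (at x)"
  shows "H b = H a"
proof -
  have "H b \<le> H a" by (rule countable_deriv0_le[OF assms])
  moreover have "(\<lambda>x. - H x) b \<le> (\<lambda>x. - H x) a"
  proof (rule countable_deriv0_le[OF ab _ K])
    show "continuous_on {a..b} (\<lambda>x. - H x)" by (intro continuous_intros cont)
    fix x assume "x \<in> {a<..<b} - K"
    from der[OF this] have "((\<lambda>x. - H x) has_real_derivative - 0) (at x)"
      by (intro derivative_eq_intros) auto
    thus "((\<lambda>x. - H x) has_real_derivative 0) (at x)" by simp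
  qed
  ultimately show ?thesis by simp
qed

locale skor =
  fixes k :: "real \<Rightarrow> real" and R0 L :: real
  assumes kcont: "continuous_on UNIV k" and R0: "0 \<le> R0" and L: "0 \<le> L"
begin

definition "G t = R0 + integral {0..t} k"
definition "m t = Inf (G ` {0..t})"
definition "M t = min 0 (m t)"
definition "Rs t = G t - M t"
definition "F t = (if Rs t = 0 \<and> k t < 0 then 0 else k t)"
definition "Kb = Sup ((\<lambda>x. \<bar>k x\<bar>) ` {0..L})"

lemma kint: "k integrable_on {a..b}"
  by (rule integrable_continuous_interval, rule continuous_on_subset[OF kcont]) auto

lemma kb: "x \<in> {0..L} \<Longrightarrow> \<bar>k x\<bar> \<le> Kb"
proof -
  assume x: "x \<in> {0..L}"
  have "compact ((\<lambda>x. \<bar>k x\<bar>) ` {0..L})"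
    by (rule compact_continuous_image, intro continuous_intros continuous_on_subset[OF kcont]) auto
  hence "bdd_above ((\<lambda>x. \<bar>k x\<bar>) ` {0..L})" by (intro bounded_imp_bdd_above compact_imp_bounded)
  thus ?thesis unfolding Kb_def using x by (intro cSup_upper) auto
qed

lemma Kb_nonneg: "0 \<le> Kb" using kb[of 0] L by force

lemma G_diff: "0 \<le> a \<Longrightarrow> a \<le> b \<Longrightarrow> G b - G a = integral {a..b} k"
  using Henstock_Kurzweil_Integration.integral_combine[of 0 a b k] kint by (simp add: G_def)

lemma G0: "G 0 = R0" by (simp add: G_def)

lemma G_cont: "continuous_on {0..b} G"
  unfolding G_def by (intro continuous_intros indefinite_integral_continuous_1 kint)

lemma G_deriv: "0 < x \<Longrightarrow> (G has_real_derivative k x) (at x)"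
proof -
  assume x: "0 < x"
  have "((\<lambda>u. integral {0..u} k) has_real_derivative k x) (at x within {0..x+1})"
    by (rule integral_has_real_derivative, rule continuous_on_subset[OF kcont]) (use x in auto)
  hence "((\<lambda>u. integral {0..u} k) has_real_derivative k x) (at x)"
    using at_within_Icc_at[of 0 x "x+1"] x by simp
  hence "((\<lambda>u. R0 + integral {0..u} k) has_real_derivative 0 + k x) (at x)"
    by (intro derivative_eq_intros) auto
  thus ?thesis unfolding G_def[abs_def] by simp
qed

lemma G_lip: assumes "0 \<le> a" "a \<le> L" "0 \<le> b" "b \<le> L" shows "\<bar>G b - G a\<bar> \<le> Kb * \<bar>b - a\<bar>"
proof -
  have *: "\<bar>G y - G x\<bar> \<le> Kb * (y - x)" if "0 \<le> x" "x \<le> y" "y \<le> L" for x y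
  proof -
    have "norm (integral {x..y} k) \<le> Kb * Henstock_Kurzweil_Integration.content {x..y}"
      using has_integral_bound_real[of Kb "{}" k "integral {x..y} k" x y] Kb_nonneg kint kb that
      by auto
    thus ?thesis using G_diff[of x y] that by simp
  qed
  show ?thesis
  proof (cases "a \<le> b")
    case True then show ?thesis using *[of a b] assms by simp
  next
    case False then show ?thesis using *[of b a] assms by (simp add: abs_minus_commute)
  qed
qed

lemma m_props: assumes "0 \<le> t" shows "(\<forall>w\<in>{0..t}. m t \<le> G w) \<and> (\<exists>z\<in>{0..t}. m t = G z)"
proof -
  obtain z where z: "z \<in> {0..t}" "\<forall>w\<in>{0..t}. G z \<le> G w"
    using continuous_attains_inf[OF compact_Icc _ G_cont[of t]] assms by auto
  have "m t = G z" unfolding m_def by (rule cInf_eq_minimum) (use z in auto)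
  thus ?thesis using z by auto
qed

lemma m_le: "0 \<le> w \<Longrightarrow> w \<le> t \<Longrightarrow> m t \<le> G w"
  using m_props[of t] by auto

lemma m_att: "0 \<le> t \<Longrightarrow> \<exists>z. 0 \<le> z \<and> z \<le> t \<and> m t = G z"
  using m_props[of t] by auto

lemma m_mono: "0 \<le> x \<Longrightarrow> x \<le> y \<Longrightarrow> m y \<le> m x"
  using m_att[of x] m_le[of _ y] by force

lemma M_mono: "0 \<le> x \<Longrightarrow> x \<le> y \<Longrightarrow> M y \<le> M x"
  using m_mono[of x y] by (auto simp: M_def)

lemma M_nonpos: "M t \<le> 0" by (simp add: M_def)

lemma M_le_G: "0 \<le> t \<Longrightarrow> M t \<le> G t"
  using m_le[of t t] by (auto simp: M_def)

lemma Rs_nonneg: "0 \<le> t \<Longrightarrow> 0 \<le> Rs t"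
  using M_le_G[of t] by (simp add: Rs_def)

lemma Rs0: "Rs 0 = R0"
proof -
  have "m 0 = G 0" using m_props[of 0] by auto
  thus ?thesis using R0 by (simp add: Rs_def M_def G0)
qed

lemma Mconst_right:
  assumes "0 \<le> x" "x \<le> y" "\<forall>w\<in>{x..y}. M x \<le> G w" shows "M y = M x"
proof -
  obtain z where z: "0 \<le> z" "z \<le> y" "m y = G z" using m_att[of y] assms by auto
  have "M x \<le> M y"
  proof (cases "z \<le> x")
    case True
    hence "m x \<le> m y" using m_le[of z x] z by simp
    thus ?thesis by (simp add: M_def)
  next
    case False
    hence "M x \<le> m y" using z assms by auto
    thus ?thesis using M_nonpos[of x] by (simp add: M_def)
  qed
  moreover have "M y \<le> M x" using M_mono assms by simp
  ultimately show ?thesis by simp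
qed

lemma Mconst_left:
  assumes "0 \<le> y" "y \<le> x" "\<forall>w\<in>{y..x}. M x < G w" shows "M y = M x"
proof -
  obtain z where z: "0 \<le> z" "z \<le> x" "m x = G z" using m_att[of x] assms by auto
  show ?thesis
  proof (cases "z \<le> y")
    case True
    hence "m y \<le> m x" using m_le[of z y] z by simp
    moreover have "m x \<le> m y" using m_mono assms by simp
    ultimately show ?thesis by (simp add: M_def)
  next
    case False
    hence "M x < m x" using z assms by auto
    hence "0 < m x" "M x = 0" by (auto simp: M_def min_def split: if_splits)
    moreover have "m x \<le> m y" using m_mono assms by simp
    ultimately show ?thesis by (simp add: M_def)
  qed
qed

lemma min0_lip: "\<bar>min 0 a - min 0 b\<bar> \<le> \<bar>(a::real) - b\<bar>"
  by (auto simp: min_def)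

lemma M_osc:
  assumes "0 \<le> x" "0 \<le> y"
  shows "\<exists>w. min x y \<le> w \<and> w \<le> max x y \<and> \<bar>M y - M x\<bar> \<le> \<bar>G y - G x\<bar> + \<bar>G w - G x\<bar>"
proof (cases "x \<le> y")
  case True
  obtain z where z: "0 \<le> z" "z \<le> y" "m y = G z" using m_att[of y] assms by auto
  show ?thesis
  proof (cases "z \<le> x")
    case True
    hence "m x \<le> m y" using m_le[of z x] z by simp
    moreover have "m y \<le> m x" using m_mono assms \<open>x \<le> y\<close> by simp
    ultimately have "M y = M x" by (simp add: M_def)
    thus ?thesis using \<open>x \<le> y\<close> by (intro exI[of _ x]) auto
  next
    case False
    have "m x \<le> G x" using m_le[of x x] assms by simp
    moreover have "m y \<le> m x" using m_mono assms \<open>x \<le> y\<close> by simp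
    ultimately have "\<bar>m y - m x\<bar> \<le> \<bar>G z - G x\<bar>" using z by simp
    hence "\<bar>M y - M x\<bar> \<le> \<bar>G z - G x\<bar>" using min0_lip[of "m y" "m x"] by (simp add: M_def)
    thus ?thesis using False z \<open>x \<le> y\<close> by (intro exI[of _ z]) auto
  qed
next
  case False
  obtain z where z: "0 \<le> z" "z \<le> x" "m x = G z" using m_att[of x] assms by auto
  show ?thesis
  proof (cases "z \<le> y")
    case True
    hence "m y \<le> m x" using m_le[of z y] z by simp
    moreover have "m x \<le> m y" using m_mono assms False by simp
    ultimately have "M y = M x" by (simp add: M_def)
    thus ?thesis using False by (intro exI[of _ x]) auto
  next
    case True2: False
    have "m y \<le> G y" using m_le[of y y] assms by simp
    moreover have "m x \<le> m y" using m_mono assms False by simp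
    ultimately have "\<bar>m y - m x\<bar> \<le> \<bar>G y - G x\<bar> + \<bar>G z - G x\<bar>" using z by simp
    hence "\<bar>M y - M x\<bar> \<le> \<bar>G y - G x\<bar> + \<bar>G z - G x\<bar>"
      using min0_lip[of "m y" "m x"] by (simp add: M_def)
    thus ?thesis using True2 z False by (intro exI[of _ z]) auto
  qed
qed

lemma M_lip: assumes "0 \<le> x" "x \<le> L" "0 \<le> y" "y \<le> L" shows "\<bar>M y - M x\<bar> \<le> 2 * Kb * \<bar>y - x\<bar>"
proof -
  obtain w where w: "min x y \<le> w" "w \<le> max x y" "\<bar>M y - M x\<bar> \<le> \<bar>G y - G x\<bar> + \<bar>G w - G x\<bar>"
    using M_osc[of x y] assms by auto
  have "\<bar>G y - G x\<bar> \<le> Kb * \<bar>y - x\<bar>" using G_lip assms by simp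
  moreover have "\<bar>G w - G x\<bar> \<le> Kb * \<bar>w - x\<bar>" using G_lip[of x w] assms w by auto
  moreover have "Kb * \<bar>w - x\<bar> \<le> Kb * \<bar>y - x\<bar>" using w Kb_nonneg
    by (intro mult_left_mono) (auto simp: min_def max_def split: if_splits)
  ultimately show ?thesis using w by linarith
qed

lemma Rs_cont: "continuous_on {0..L} Rs"
proof -
  have "(2 * Kb)-lipschitz_on {0..L} M"
    by (rule lipschitz_onI) (use M_lip Kb_nonneg in \<open>auto simp: dist_real_def\<close>)
  hence "continuous_on {0..L} M" by (rule lipschitz_on_continuous_on)
  thus ?thesis unfolding Rs_def[abs_def] by (intro continuous_intros G_cont)
qed

lemma zero_exists: assumes "0 \<le> t0" "G t0 \<le> 0" shows "\<exists>z. 0 \<le> z \<and> z \<le> t0 \<and> Rs z = 0"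
proof -
  obtain z where z: "0 \<le> z" "z \<le> t0" "m t0 = G z" using m_att assms by auto
  have "m z \<le> G z" using m_le[of z z] z by simp
  moreover have "m t0 \<le> m z" using m_mono[of z t0] z by simp
  ultimately have "m z = G z" using z by simp
  moreover have "G z \<le> 0" using z m_le[of t0 t0] assms by simp
  ultimately have "Rs z = 0" by (simp add: Rs_def M_def)
  thus ?thesis using z by auto
qed

end

context skor
begin

lemma Rs_isCont: "0 < x \<Longrightarrow> x < L \<Longrightarrow> isCont Rs x"
  by (rule continuous_on_interior[OF Rs_cont]) auto

lemma k_isCont: "isCont k x"
  by (rule continuous_on_interior[OF kcont]) auto

lemma D_pos:
  assumes x: "0 < x" "x < L" and pos: "Rs x > 0"
  shows "(Rs has_real_derivative k x) (at x) \<and> isCont F x"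
proof -
  define \<epsilon> where "\<epsilon> = Rs x"
  have eps: "\<epsilon> > 0" using pos by (simp add: \<epsilon>_def)
  have "isCont G x" using G_deriv[OF x(1)] by (rule DERIV_isCont)
  hence "\<forall>r>0. \<exists>s>0. \<forall>y. y \<noteq> x \<and> norm (y - x) < s \<longrightarrow> norm (G y - G x) < r"
    unfolding isCont_def LIM_eq .
  then obtain \<eta> where \<eta>0: "\<eta> > 0" and \<eta>1: "\<forall>y. y \<noteq> x \<and> norm (y - x) < \<eta> \<longrightarrow> norm (G y - G x) < \<epsilon>/2"
    using eps half_gt_zero by blast
  have \<eta>: "\<eta> > 0" "\<And>y. \<bar>y - x\<bar> < \<eta> \<Longrightarrow> \<bar>G y - G x\<bar> < \<epsilon>/2"
    using \<eta>0 apply simp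
    subgoal for y using \<eta>1 eps by (cases "y = x") auto
    done
  define \<rho> where "\<rho> = min \<eta> x"
  have rho: "\<rho> > 0" using \<eta> x by (simp add: \<rho>_def)
  have GM: "G x = M x + \<epsilon>" by (simp add: \<epsilon>_def Rs_def)
  have Meq: "M y = M x" if y: "\<bar>y - x\<bar> < \<rho>" for y
  proof (cases "x \<le> y")
    case True
    show ?thesis
    proof (rule Mconst_right)
      show "\<forall>w\<in>{x..y}. M x \<le> G w"
      proof
        fix w assume "w \<in> {x..y}"
        hence "\<bar>w - x\<bar> < \<eta>" using y by (auto simp: \<rho>_def)
        hence "\<bar>G w - G x\<bar> < \<epsilon>/2" by (rule \<eta>(2))
        thus "M x \<le> G w" using GM eps abs_less_iff[of "G w - G x" "\<epsilon>/2"] by linarith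
      qed
    qed (use True x in auto)
  next
    case False
    show ?thesis
    proof (rule Mconst_left)
      show "\<forall>w\<in>{y..x}. M x < G w"
      proof
        fix w assume "w \<in> {y..x}"
        hence "\<bar>w - x\<bar> < \<eta>" using y False by (auto simp: \<rho>_def)
        hence "\<bar>G w - G x\<bar> < \<epsilon>/2" by (rule \<eta>(2))
        thus "M x < G w" using GM eps abs_less_iff[of "G w - G x" "\<epsilon>/2"] by linarith
      qed
    qed (use False y in \<open>auto simp: \<rho>_def\<close>)
  qed
  have ev: "\<forall>\<^sub>F y in nhds x. Rs y = G y - M x"
    unfolding eventually_nhds_metric
  proof (intro exI[of _ \<rho>] conjI allI impI rho)
    fix y assume "dist y x < \<rho>"
    hence "M y = M x" using Meq[of y] by (simp add: dist_real_def)
    thus "Rs y = G y - M x" by (simp add: Rs_def)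
  qed
  have "((\<lambda>y. G y - M x) has_real_derivative k x - 0) (at x)"
    by (rule DERIV_diff[OF G_deriv[OF x(1)] DERIV_const])
  hence d: "(Rs has_real_derivative k x) (at x)"
    using DERIV_cong_ev[OF refl ev refl] by simp
  have "(Rs \<longlongrightarrow> Rs x) (nhds x)" using Rs_isCont[OF x] by (simp add: isCont_def tendsto_at_iff_tendsto_nhds)
  hence "\<forall>\<^sub>F y in nhds x. Rs y > 0" using pos by (rule order_tendstoD(1))
  hence "\<forall>\<^sub>F y in nhds x. F y = k y" by eventually_elim (auto simp: F_def)
  hence "isCont F x \<longleftrightarrow> isCont k x" by (rule isCont_cong)
  hence "isCont F x" using k_isCont by simp
  with d show ?thesis by simp
qed

lemma D_kpos: assumes x: "0 < x" and z: "Rs x = 0" and kp: "k x > 0" shows False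
proof -
  obtain d where d: "d > 0" "\<And>h. h > 0 \<Longrightarrow> h < d \<Longrightarrow> G (x - h) < G x"
    using DERIV_pos_inc_left[OF G_deriv[OF x] kp] by auto
  define h where "h = min (d/2) (x/2)"
  have h1: "h \<le> d/2" "h \<le> x/2" unfolding h_def by (rule min.cobounded1, rule min.cobounded2)
  have h: "h > 0" "h < d" "h < x" using d x h1 by (auto simp: h_def)
  have "G (x - h) < G x" using d(2) h by simp
  also have "G x = M x" using z by (simp add: Rs_def)
  also have "M x \<le> M (x - h)" using M_mono[of "x - h" x] h by simp
  also have "M (x - h) \<le> G (x - h)" using M_le_G h by simp
  finally show False by simp
qed

lemma D_kzero:
  assumes x: "0 < x" "x < L" and z: "Rs x = 0" and k0: "k x = 0"
  shows "(Rs has_real_derivative 0) (at x) \<and> isCont F x"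
proof
  have Gd: "((\<lambda>y. (G y - G x) / (y - x)) \<longlongrightarrow> 0) (at x)"
    using G_deriv[OF x(1)] k0 by (simp add: has_field_derivative_iff)
  show "(Rs has_real_derivative 0) (at x)"
    unfolding has_field_derivative_iff LIM_eq
  proof (intro allI impI)
    fix r :: real assume r: "r > 0"
    obtain s1 where s1: "s1 > 0" "\<And>y. y \<noteq> x \<Longrightarrow> norm (y - x) < s1 \<Longrightarrow> norm ((G y - G x) / (y - x) - 0) < r/4"
      using Gd r unfolding LIM_eq by (metis zero_less_divide_iff zero_less_numeral)
    have Gb: "\<bar>G y - G x\<bar> \<le> r/4 * \<bar>y - x\<bar>" if "\<bar>y - x\<bar> < s1" for y
    proof (cases "y = x")
      case False
      hence "\<bar>(G y - G x) / (y - x)\<bar> < r/4" using s1(2)[of y] that by simp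
      thus ?thesis using False by (simp add: abs_divide divide_less_eq)
    qed simp
    define s where "s = min s1 x"
    have s: "s > 0" using s1 x by (simp add: s_def)
    show "\<exists>s>0. \<forall>y. y \<noteq> x \<and> norm (y - x) < s \<longrightarrow> norm ((Rs y - Rs x) / (y - x) - 0) < r"
    proof (intro exI[of _ s] conjI allI impI s)
      fix y assume y: "y \<noteq> x \<and> norm (y - x) < s"
      hence y0: "0 \<le> y" and ys1: "\<bar>y - x\<bar> < s1" by (auto simp: s_def)
      obtain w where w: "min x y \<le> w" "w \<le> max x y" "\<bar>M y - M x\<bar> \<le> \<bar>G y - G x\<bar> + \<bar>G w - G x\<bar>"
        using M_osc[of x y] x y0 by auto
      have wx: "\<bar>w - x\<bar> \<le> \<bar>y - x\<bar>" using w by (auto simp: min_def max_def split: if_splits)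
      have "\<bar>G w - G x\<bar> \<le> r/4 * \<bar>w - x\<bar>" using Gb[of w] wx ys1 by simp
      also have "\<dots> \<le> r/4 * \<bar>y - x\<bar>" using wx r by (intro mult_left_mono) auto
      finally have gw: "\<bar>G w - G x\<bar> \<le> r/4 * \<bar>y - x\<bar>" .
      have gy: "\<bar>G y - G x\<bar> \<le> r/4 * \<bar>y - x\<bar>" using Gb ys1 by simp
      have GxMx: "G x = M x" using z by (simp add: Rs_def)
      have "Rs y - Rs x = (G y - G x) - (M y - M x)" using z GxMx by (simp add: Rs_def)
      hence "\<bar>Rs y - Rs x\<bar> \<le> 3 * (r/4) * \<bar>y - x\<bar>" using w(3) gw gy by linarith
      also have "\<dots> < r * \<bar>y - x\<bar>" using r y by simp
      finally show "norm ((Rs y - Rs x) / (y - x) - 0) < r"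
        using y by (simp add: abs_divide divide_less_eq)
    qed
  qed
  show "isCont F x"
  proof -
    have Fx: "F x = 0" using k0 by (simp add: F_def)
    have "((\<lambda>y. \<bar>k y\<bar>) \<longlongrightarrow> \<bar>k x\<bar>) (at x)" using k_isCont[of x] unfolding isCont_def
      by (intro tendsto_intros)
    hence t1: "((\<lambda>y. \<bar>k y\<bar>) \<longlongrightarrow> 0) (at x)" using k0 by simp
    hence t2: "((\<lambda>y. - \<bar>k y\<bar>) \<longlongrightarrow> 0) (at x)" using tendsto_minus[OF t1] by simp
    have "(F \<longlongrightarrow> 0) (at x)"
      by (rule tendsto_sandwich[OF _ _ t2 t1]) (auto simp: F_def intro!: always_eventually)
    thus ?thesis using Fx by (simp add: isCont_def)
  qed
qed

lemma D_loc:
  assumes loc: "\<exists>\<eta>>0. \<forall>y. \<bar>y - x\<bar> < \<eta> \<longrightarrow> Rs y = 0" and kn: "k x < 0"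
  shows "(Rs has_real_derivative 0) (at x) \<and> isCont F x"
proof
  have ev: "\<forall>\<^sub>F y in nhds x. Rs y = 0"
    using loc unfolding eventually_nhds_metric by (auto simp: dist_real_def)
  show "(Rs has_real_derivative 0) (at x)"
    using DERIV_cong_ev[OF refl ev refl] by simp
  have "(k \<longlongrightarrow> k x) (nhds x)" using k_isCont[of x] by (simp add: isCont_def tendsto_at_iff_tendsto_nhds)
  hence "\<forall>\<^sub>F y in nhds x. k y < 0" using kn by (rule order_tendstoD(2))
  with ev have "\<forall>\<^sub>F y in nhds x. F y = 0" by eventually_elim (auto simp: F_def)
  hence "isCont F x \<longleftrightarrow> isCont (\<lambda>_. 0::real) x" by (rule isCont_cong)
  thus "isCont F x" by simp
qed

lemma right_zero:
  assumes x: "0 < x" and z: "Rs x = 0" and kn: "k x < 0"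
  shows "\<exists>\<eta>>0. \<forall>y. x \<le> y \<and> y < x + \<eta> \<longrightarrow> Rs y = 0"
proof -
  have "\<forall>r>0. \<exists>s>0. \<forall>y. y \<noteq> x \<and> norm (y - x) < s \<longrightarrow> norm (k y - k x) < r"
    using k_isCont[of x] unfolding isCont_def LIM_eq .
  then obtain \<eta> where \<eta>0: "\<eta> > 0" and \<eta>1: "\<forall>y. y \<noteq> x \<and> norm (y - x) < \<eta> \<longrightarrow> norm (k y - k x) < - k x"
    using kn by (meson neg_0_less_iff_less)
  have \<eta>: "\<eta> > 0" "\<And>y. \<bar>y - x\<bar> < \<eta> \<Longrightarrow> k y < 0"
    using \<eta>0 apply simp
    subgoal for y using \<eta>1 kn by (cases "y = x") (auto simp: abs_less_iff)
    done
  have "Rs y = 0" if y: "x \<le> y" "y < x + \<eta>" for y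
  proof -
    have Gdec: "G y \<le> G w" if w: "x \<le> w" "w \<le> y" for w
    proof -
      have "integral {w..y} k \<le> integral {w..y} (\<lambda>_. 0)"
        by (rule integral_le[OF kint]) (use w y \<eta> in \<open>auto intro!: less_imp_le\<close>)
      thus ?thesis using G_diff[of w y] w x by simp
    qed
    obtain z where zz: "0 \<le> z" "z \<le> y" "m y = G z" using m_att[of y] x y by auto
    have GxM: "G x = M x" using z by (simp add: Rs_def)
    have "G y \<le> m y"
    proof (cases "z \<le> x")
      case True
      hence "m x \<le> G z" using m_le zz by simp
      moreover have "M x \<le> m x" by (simp add: M_def)
      ultimately show ?thesis using GxM Gdec[of x] y zz by simp
    next
      case False thus ?thesis using Gdec[of z] zz by simp
    qed
    moreover have "G y \<le> 0" using Gdec[of x] y GxM M_nonpos[of x] by simp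
    ultimately have "G y \<le> M y" by (simp add: M_def)
    thus ?thesis using M_le_G[of y] x y by (simp add: Rs_def)
  qed
  thus ?thesis using \<eta> by auto
qed

definition "Kset = {x \<in> {0<..<L}. Rs x = 0 \<and> k x < 0 \<and> \<not> (\<exists>\<eta>>0. \<forall>y. \<bar>y - x\<bar> < \<eta> \<longrightarrow> Rs y = 0)}"

lemma Kset_countable: "countable Kset"
proof -
  define \<eta>f where "\<eta>f x = (SOME \<eta>. \<eta> > 0 \<and> (\<forall>y. x \<le> y \<and> y < x + \<eta> \<longrightarrow> Rs y = 0))" for x
  have \<eta>f: "\<eta>f x > 0 \<and> (\<forall>y. x \<le> y \<and> y < x + \<eta>f x \<longrightarrow> Rs y = 0)" if "x \<in> Kset" for x
  proof -
    have "\<exists>\<eta>>0. \<forall>y. x \<le> y \<and> y < x + \<eta> \<longrightarrow> Rs y = 0"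
      using right_zero that by (auto simp: Kset_def)
    thus ?thesis unfolding \<eta>f_def by (rule someI_ex)
  qed
  define q where "q x = (SOME q. q \<in> \<rat> \<and> x < q \<and> q < x + \<eta>f x)" for x
  have q: "q x \<in> \<rat> \<and> x < q x \<and> q x < x + \<eta>f x" if "x \<in> Kset" for x
  proof -
    have "\<exists>q. q \<in> \<rat> \<and> x < q \<and> q < x + \<eta>f x"
      using Rats_dense_in_real[of x "x + \<eta>f x"] \<eta>f[OF that] by auto
    thus ?thesis unfolding q_def by (rule someI_ex)
  qed
  have neq: "q x \<noteq> q x'" if xK: "x \<in> Kset" and x'K: "x' \<in> Kset" and lt: "x < x'" for x x'
  proof
    assume eq: "q x = q x'"
    have "x' < x + \<eta>f x" using q[OF x'K] q[OF xK] eq by auto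
    define \<rho> where "\<rho> = min (x' - x) (x + \<eta>f x - x')"
    have "\<rho> > 0" using lt \<open>x' < x + \<eta>f x\<close> by (simp add: \<rho>_def)
    moreover have "\<forall>y. \<bar>y - x'\<bar> < \<rho> \<longrightarrow> Rs y = 0"
      using \<eta>f[OF xK] by (auto simp: \<rho>_def abs_less_iff)
    ultimately show False using x'K by (auto simp: Kset_def)
  qed
  have "inj_on q Kset"
  proof (rule inj_onI)
    fix x x' assume "x \<in> Kset" "x' \<in> Kset" "q x = q x'"
    thus "x = x'" using neq by (metis linorder_neqE_linordered_idom)
  qed
  moreover have "countable (q ` Kset)"
    using q by (intro countable_subset[OF _ countable_rat]) auto
  ultimately show ?thesis using countable_image_inj_on by blast
qed

lemma good_deriv:
  assumes y: "0 < y" "y < L" "y \<notin> Kset"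
  shows "(Rs has_real_derivative F y) (at y) \<and> isCont F y"
proof (cases "Rs y > 0")
  case True
  thus ?thesis using D_pos[OF y(1,2) True] by (simp add: F_def)
next
  case False
  hence z: "Rs y = 0" using Rs_nonneg[of y] y by simp
  consider "k y > 0" | "k y = 0" | "k y < 0" by linarith
  thus ?thesis
  proof cases
    case 1 thus ?thesis using D_kpos[OF y(1) z] by simp
  next
    case 2 thus ?thesis using D_kzero[OF y(1,2) z] by (simp add: F_def)
  next
    case 3
    hence "\<exists>\<eta>>0. \<forall>x. \<bar>x - y\<bar> < \<eta> \<longrightarrow> Rs x = 0" using y z by (auto simp: Kset_def)
    thus ?thesis using D_loc 3 z by (simp add: F_def)
  qed
qed

lemma F_bound: "0 \<le> y \<Longrightarrow> y \<le> L \<Longrightarrow> \<bar>F y\<bar> \<le> Kb"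
  using kb[of y] Kb_nonneg by (auto simp: F_def)

lemma F_integrable: assumes t: "0 < t" "t \<le> L" shows "F integrable_on {0..t}"
proof -
  define F' where "F' y = (if y \<in> {0<..<t} then F y else 0)" for y
  have cont: "continuous_on (- (Kset \<union> {0, t})) F'"
  proof (rule continuous_at_imp_continuous_on, intro ballI)
    fix y assume y: "y \<in> - (Kset \<union> {0, t})"
    show "isCont F' y"
    proof (cases "y \<in> {0<..<t}")
      case True
      have ev: "\<forall>\<^sub>F x in nhds y. F' x = F x"
        using eventually_nhds_in_open[OF open_greaterThanLessThan True]
        by eventually_elim (simp add: F'_def)
      have "isCont F y" using good_deriv[of y] True y t by auto
      thus ?thesis using isCont_cong[OF ev] by simp
    next
      case False
      hence "y < 0 \<or> y > t" using y by auto
      hence "\<forall>\<^sub>F x in nhds y. F' x = 0"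
      proof
        assume "y < 0"
        have "eventually (\<lambda>z. z \<in> {..<0}) (nhds y)"
          by (rule eventually_nhds_in_open) (use \<open>y < 0\<close> in auto)
        thus ?thesis by eventually_elim (auto simp: F'_def)
      next
        assume "y > t"
        have "eventually (\<lambda>z. z \<in> {t<..}) (nhds y)"
          by (rule eventually_nhds_in_open) (use \<open>y > t\<close> in auto)
        thus ?thesis by eventually_elim (auto simp: F'_def)
      qed
      hence "isCont F' y \<longleftrightarrow> isCont (\<lambda>_. 0::real) y" by (rule isCont_cong)
      thus ?thesis by simp
    qed
  qed
  have "countable (Kset \<union> {0, t})" using Kset_countable by simp
  hence "F' \<in> borel_measurable borel"
    using borel_measurable_continuous_countable_exceptions cont by blast
  hence meas: "F' \<in> borel_measurable (lebesgue_on {0..t})"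
    by (simp add: measurable_completion measurable_restrict_space1)
  have "F' integrable_on {0..t}"
  proof (rule measurable_bounded_by_integrable_imp_integrable[OF meas])
    show "(\<lambda>_. Kb) integrable_on {0..t}" by (rule integrable_const_ivl)
    show "\<And>x. x \<in> {0..t} \<Longrightarrow> norm (F' x) \<le> Kb"
      using F_bound t Kb_nonneg by (auto simp: F'_def)
  qed auto
  thus ?thesis
    using integrable_spike_finite[of "{0,t}" "{0..t}" F F'] by (auto simp: F'_def)
qed

lemma Rs_eq: assumes t: "0 \<le> t" "t \<le> L" shows "(F has_integral (Rs t - Rs 0)) {0..t}"
proof (cases "t = 0")
  case True thus ?thesis using has_integral_refl(2)[of F 0] by simp
next
  case False
  hence t0: "0 < t" using t by simp
  have Fi: "F integrable_on {0..t}" by (rule F_integrable[OF t0 t(2)])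
  define H where "H y = Rs y - integral {0..y} F" for y
  have Hc: "continuous_on {0..t} H" unfolding H_def
    by (intro continuous_intros indefinite_integral_continuous_1 Fi continuous_on_subset[OF Rs_cont])
      (use t in auto)
  have Hd: "(H has_real_derivative 0) (at y)" if y: "y \<in> {0<..<t} - Kset" for y
  proof -
    have g: "(Rs has_real_derivative F y) (at y) \<and> isCont F y" using good_deriv[of y] y t by auto
    have "((\<lambda>u. integral {0..u} F) has_vector_derivative F y) (at y within {0..t} - {})"
      by (rule integral_has_vector_derivative_continuous_at[OF Fi])
         (use y g in \<open>auto intro: continuous_at_imp_continuous_within\<close>)
    hence "((\<lambda>u. integral {0..u} F) has_real_derivative F y) (at y)"
      using at_within_Icc_at[of 0 y t] y by (simp add: has_real_derivative_iff_has_vector_derivative)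
    hence "(H has_real_derivative F y - F y) (at y)" unfolding H_def[abs_def]
      using g by (intro derivative_eq_intros) auto
    thus ?thesis by simp
  qed
  have "H t = H 0" by (rule countable_deriv0_eq[OF t(1) Hc Kset_countable Hd])
  hence "integral {0..t} F = Rs t - Rs 0" by (simp add: H_def)
  thus ?thesis using integrable_integral[OF Fi] by simp
qed

end

definition hfun :: "real \<Rightarrow> real \<Rightarrow> pt \<Rightarrow> real \<Rightarrow> pt \<Rightarrow> real" where
  "hfun A B x r y = A - B * sens_p x r y"

lemma fR_hfun: "f_R A B x r R y = (if R = 0 \<and> hfun A B x r y < 0 then 0 else hfun A B x r y)"
  by (simp add: f_R_def hfun_def)

lemma hfun_cont: "continuous_on S c \<Longrightarrow> continuous_on S (\<lambda>\<tau>. hfun A B x r (c \<tau>))"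
  unfolding hfun_def sens_p_def divide_inverse by (intro continuous_intros) auto

lemma sens_p_bounds: "0 \<le> sens_p x r y" "sens_p x r y \<le> 1"
  by (auto simp: sens_p_def)

lemma skorokhod:
  fixes c :: "real \<Rightarrow> pt"
  assumes cc: "continuous_on {0..L} c" and L: "0 \<le> L" and R0: "0 \<le> R0" and t0: "t0 \<in> {0..L}"
    and neg: "R0 + integral {0..t0} (\<lambda>\<tau>. hfun A B x r (c \<tau>)) \<le> 0"
  shows "\<exists>R. (\<forall>t\<in>{0..L}. ((\<lambda>\<tau>. f_R A B x r (R \<tau>) (c \<tau>)) has_integral (R t - R 0)) {0..t}) \<and>
             (\<forall>\<tau>\<in>{0..L}. 0 \<le> R \<tau>) \<and> (\<exists>\<tau>\<in>{0..L}. R \<tau> = 0) \<and> R 0 = R0"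
proof -
  define cl where "cl \<tau> = c (max 0 (min L \<tau>))" for \<tau>
  define k where "k \<tau> = hfun A B x r (cl \<tau>)" for \<tau>
  have "continuous_on UNIV cl" unfolding cl_def
    by (rule continuous_on_compose2[OF cc]) (auto intro!: continuous_intros simp: L)
  hence kc: "continuous_on UNIV k" unfolding k_def by (rule hfun_cont)
  interpret S: skor k R0 L by unfold_locales (simp_all add: kc R0 L)
  have keq: "k \<tau> = hfun A B x r (c \<tau>)" if "\<tau> \<in> {0..L}" for \<tau>
    using that by (simp add: k_def cl_def)
  show ?thesis
  proof (intro exI[of _ S.Rs] conjI ballI)
    fix t assume t: "t \<in> {0..L}"
    have "(S.F has_integral S.Rs t - S.Rs 0) {0..t}" using S.Rs_eq t by auto
    moreover have "S.F \<tau> = f_R A B x r (S.Rs \<tau>) (c \<tau>)" if "\<tau> \<in> {0..t}" for \<tau>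
      using that t keq[of \<tau>] by (simp add: S.F_def fR_hfun)
    ultimately show "((\<lambda>\<tau>. f_R A B x r (S.Rs \<tau>) (c \<tau>)) has_integral S.Rs t - S.Rs 0) {0..t}"
      using has_integral_cong[of "{0..t}" S.F "\<lambda>\<tau>. f_R A B x r (S.Rs \<tau>) (c \<tau>)"] by simp
  next
    fix \<tau> assume "\<tau> \<in> {0..L}" thus "0 \<le> S.Rs \<tau>" using S.Rs_nonneg by simp
  next
    have "S.G t0 = R0 + integral {0..t0} (\<lambda>\<tau>. hfun A B x r (c \<tau>))"
      unfolding S.G_def using t0 keq by (intro arg_cong[where f="\<lambda>z. R0 + z"] integral_cong) auto
    hence "S.G t0 \<le> 0" using neg by simp
    then obtain z where "0 \<le> z" "z \<le> t0" "S.Rs z = 0" using S.zero_exists t0 by auto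
    thus "\<exists>\<tau>\<in>{0..L}. S.Rs \<tau> = 0" using t0 by auto
  next
    show "S.Rs 0 = R0" by (rule S.Rs0)
  qed
qed

lemma vd_bot:
  assumes "t \<notin> closure S"
  shows "(f has_vector_derivative d) (at t within S)"
proof -
  have "\<not> t islimpt S" using assms by (auto simp: closure_def)
  hence "trivial_limit (at t within S)" using trivial_limit_within by blast
  hence "at t within S = bot" by (simp add: trivial_limit_def)
  thus ?thesis unfolding has_vector_derivative_def has_derivative_within
    by (simp add: bounded_linear_scaleR_left)
qed

lemma vd_glue:
  assumes "(f has_vector_derivative d) (at t within S)" "(f has_vector_derivative d) (at t within T)"
  shows "(f has_vector_derivative d) (at t within S \<union> T)"
  using assms unfolding has_vector_derivative_def has_derivative_within
  by (simp add: Lim_within_Un)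

lemma scont:
  fixes s :: "real \<Rightarrow> 'a::real_normed_vector"
  assumes "\<forall>t\<in>{0..T}. (s has_vector_derivative u t) (at t within {0..T})"
  shows "continuous_on {0..T} s"
  using assms has_vector_derivative_continuous continuous_on_eq_continuous_within by blast

lemma norm_le1: "(norm (v::'a::real_normed_vector))\<^sup>2 \<le> 1 \<Longrightarrow> norm v \<le> 1"
  by (rule power2_le_imp_le) auto

lemma speed:
  fixes s :: "real \<Rightarrow> 'a::real_normed_vector"
  assumes der: "\<forall>t\<in>{0..T}. (s has_vector_derivative u t) (at t within {0..T})"
    and nb: "\<forall>t\<in>{0..T}. (norm (u t))\<^sup>2 \<le> 1"
    and ab: "0 \<le> a" "a \<le> b" "b \<le> T"
  shows "norm (s b - s a) \<le> b - a"
proof (cases "a = b")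
  case True thus ?thesis by simp
next
  case False
  hence ab': "a < b" using ab by simp
  have "norm (s b - s a) \<le> id b - id a"
  proof (rule differentiable_bound_general[OF ab'])
    show "continuous_on {a..b} s" using scont[OF der] ab by (auto intro: continuous_on_subset)
    show "continuous_on {a..b} id" by (intro continuous_intros)
    fix y assume y: "a < y" "y < b"
    have "(s has_vector_derivative u y) (at y within {0..T})" using der y ab by auto
    thus "(s has_vector_derivative u y) (at y)" using at_within_Icc_at[of 0 y T] y ab by simp
    show "(id has_vector_derivative 1) (at y)"
      unfolding id_def using DERIV_ident[THEN has_real_derivative_iff_has_vector_derivative[THEN iffD1]] .
    show "norm (u y) \<le> 1" using nb y ab by (intro norm_le1) auto
  qed
  thus ?thesis by simp
qed

lemma straight:
  fixes s :: "real \<Rightarrow> 'a::real_inner"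
  assumes sp: "\<And>a b. 0 \<le> a \<Longrightarrow> a \<le> b \<Longrightarrow> b \<le> T \<Longrightarrow> norm (s b - s a) \<le> b - a"
    and ab: "0 \<le> a" "a < b" "b \<le> T" and eq: "norm (s b - s a) = b - a" and t: "a \<le> t" "t \<le> b"
  shows "s t = s a + ((t - a) / (b - a)) *\<^sub>R (s b - s a)"
proof -
  define X where "X = s t - s a"
  define Y where "Y = s b - s t"
  have nX: "norm X \<le> t - a" using sp[of a t] ab t by (simp add: X_def)
  have nY: "norm Y \<le> b - t" using sp[of t b] ab t by (simp add: Y_def)
  have XY: "X + Y = s b - s a" by (simp add: X_def Y_def)
  have "norm (X + Y) \<le> norm X + norm Y" by (rule norm_triangle_ineq)
  moreover have nXY: "norm (X + Y) = b - a" using XY eq by simp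
  ultimately have eqs1: "norm X = t - a" using nX nY by linarith
  have eqs2: "norm Y = b - t" using \<open>norm (X + Y) \<le> norm X + norm Y\<close> nX nY nXY by linarith
  have eqs3: "norm (X + Y) = norm X + norm Y" using eqs1 eqs2 nXY by linarith
  note eqs = eqs1 eqs2 eqs3
  from eqs3 have "norm X *\<^sub>R Y = norm Y *\<^sub>R X" using norm_triangle_eq[of X Y] by blast
  hence "(t - a) *\<^sub>R Y = (b - t) *\<^sub>R X" by (simp only: eqs1 eqs2)
  hence e1: "(t - a) *\<^sub>R (s b - s t) = (b - t) *\<^sub>R (s t - s a)" by (simp only: X_def Y_def)
  have "(b - a) *\<^sub>R s t = (t - a) *\<^sub>R s b + (b - t) *\<^sub>R s a"
  proof -
    have "(t - a) *\<^sub>R s b - (t - a) *\<^sub>R s t = (b - t) *\<^sub>R s t - (b - t) *\<^sub>R s a"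
      using e1 by (simp add: scaleR_diff_right)
    hence "(t - a) *\<^sub>R s b + (b - t) *\<^sub>R s a = (t - a) *\<^sub>R s t + (b - t) *\<^sub>R s t"
      by (simp add: algebra_simps)
    also have "\<dots> = (b - a) *\<^sub>R s t" by (simp add: scaleR_left_distrib[symmetric])
    finally show ?thesis by simp
  qed
  hence eqst: "(b - a) *\<^sub>R s t = (t - a) *\<^sub>R s b + (b - t) *\<^sub>R s a" .
  have "s t = (1 / (b - a)) *\<^sub>R ((b - a) *\<^sub>R s t)" using ab by simp
  also have "\<dots> = (1 / (b - a)) *\<^sub>R ((t - a) *\<^sub>R s b + (b - t) *\<^sub>R s a)"
    by (simp only: eqst)
  also have "\<dots> = s a + ((t - a) / (b - a)) *\<^sub>R (s b - s a)"
  proof -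
    have "(1 / (b - a)) *\<^sub>R ((t - a) *\<^sub>R s b + (b - t) *\<^sub>R s a)
        = ((t - a) / (b - a)) *\<^sub>R s b + ((b - t) / (b - a)) *\<^sub>R s a"
      by (simp add: scaleR_add_right)
    also have "(b - t) / (b - a) = 1 - (t - a) / (b - a)" using ab by (simp add: field_simps)
    finally show ?thesis by (simp add: algebra_simps)
  qed
  finally show ?thesis .
qed

lemma competitor:
  fixes s' u' :: "real \<Rightarrow> pt"
  assumes opt: "draining_optimal A B x r s_phi s_psi R0 T u s R" and R0: "0 \<le> R0" and T': "0 \<le> T'"
    and der: "\<forall>t\<in>{0..T'}. (s' has_vector_derivative u' t) (at t within {0..T'})"
    and nb: "\<forall>t\<in>{0..T'}. (norm (u' t))\<^sup>2 \<le> 1"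
    and s0: "s' 0 = s_phi" and sT: "s' T' = s_psi"
    and t0: "t0 \<in> {0..T'}" and neg: "R0 + integral {0..t0} (\<lambda>\<tau>. hfun A B x r (s' \<tau>)) \<le> 0"
  shows "T \<le> T'"
proof -
  obtain R' where R': "\<forall>t\<in>{0..T'}. ((\<lambda>\<tau>. f_R A B x r (R' \<tau>) (s' \<tau>)) has_integral (R' t - R' 0)) {0..t}"
    "\<forall>\<tau>\<in>{0..T'}. 0 \<le> R' \<tau>" "\<exists>\<tau>\<in>{0..T'}. R' \<tau> = 0" "R' 0 = R0"
    using skorokhod[OF scont[OF der] T' R0 t0 neg] by blast
  have "draining_feasible A B x r s_phi s_psi R0 T' u' s' R'"
    unfolding draining_feasible_def using T' der R' nb s0 sT by blast
  thus ?thesis using opt unfolding draining_optimal_def by blast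
qed

lemma maxsq_deriv: "((\<lambda>z::real. (max 0 z)\<^sup>2) has_real_derivative 2 * max 0 z) (at z)"
proof -
  consider "z > 0" | "z < 0" | "z = 0" by linarith
  thus ?thesis
  proof cases
    case 1
    have ev: "\<forall>\<^sub>F w in nhds z. (max 0 w)\<^sup>2 = w\<^sup>2"
      using eventually_nhds_in_open[OF open_greaterThan, of z 0] 1
      by (auto elim!: eventually_mono)
    have "((\<lambda>w. w\<^sup>2) has_real_derivative 2 * z) (at z)"
      using DERIV_pow[of 2 z] by simp
    thus ?thesis using DERIV_cong_ev[OF refl ev, of "2 * max 0 z" "2 * z"] 1 by simp
  next
    case 2
    have ev: "\<forall>\<^sub>F w in nhds z. (max 0 w)\<^sup>2 = 0"
      using eventually_nhds_in_open[OF open_lessThan, of z 0] 2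
      by (auto elim!: eventually_mono)
    thus ?thesis using DERIV_cong_ev[OF refl ev, of "2 * max 0 z" 0] 2 by simp
  next
    case 3
    have ev: "\<forall>\<^sub>F y in at (0::real). ((max 0 y)\<^sup>2 - (max 0 0)\<^sup>2) / (y - 0) = max 0 y"
      unfolding eventually_at_filter
      by (rule always_eventually) (auto simp: max_def power2_eq_square field_simps)
    have "((\<lambda>y::real. max 0 y) \<longlongrightarrow> max 0 0) (at 0)"
      by (intro tendsto_intros)
    hence "((\<lambda>y::real. ((max 0 y)\<^sup>2 - (max 0 0)\<^sup>2) / (y - 0)) \<longlongrightarrow> 2 * max 0 (0::real)) (at 0)"
      using tendsto_cong[OF ev] by simp
    thus ?thesis using 3 by (simp add: has_field_derivative_iff)
  qed
qed

lemma tail: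
  fixes s u :: "real \<Rightarrow> pt"
  assumes opt: "draining_optimal A B x r s_phi s_psi R0 T u s R" and R0: "0 \<le> R0"
    and a: "0 \<le> a" "a \<le> T" and Ga: "R0 + integral {0..a} (\<lambda>\<tau>. hfun A B x r (s \<tau>)) \<le> 0"
  shows "T \<le> a + norm (s_psi - s a)"
proof -
  have feas: "draining_feasible A B x r s_phi s_psi R0 T u s R"
    using opt by (simp add: draining_optimal_def)
  hence der: "\<forall>t\<in>{0..T}. (s has_vector_derivative u t) (at t within {0..T})"
    and nb: "\<forall>t\<in>{0..T}. (norm (u t))\<^sup>2 \<le> 1" and s0: "s 0 = s_phi"
    unfolding draining_feasible_def by auto
  have der_a: "\<forall>t\<in>{0..a}. (s has_vector_derivative u t) (at t within {0..a})"
  proof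
    fix t assume t: "t \<in> {0..a}"
    hence "(s has_vector_derivative u t) (at t within {0..T})" using der a by auto
    thus "(s has_vector_derivative u t) (at t within {0..a})"
      by (rule has_vector_derivative_within_subset) (use a in auto)
  qed
  define d0 where "d0 = norm (s_psi - s a)"
  show ?thesis
  proof (cases "d0 = 0")
    case True
    hence sa: "s a = s_psi" by (simp add: d0_def)
    have "T \<le> a"
      by (rule competitor[OF opt R0 a(1) der_a _ s0 sa _ Ga]) (use nb a in auto)
    thus ?thesis using norm_ge_zero[of "s_psi - s a"] by linarith
  next
    case False
    hence d0: "d0 > 0" by (simp add: d0_def)
    have key: "T \<le> a + d0 + \<delta>" if \<delta>: "0 < \<delta>" "\<delta> \<le> d0" for \<delta>
    proof -
      define P where "P = s a"
      define v where "v = u a"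
      have nv: "norm v \<le> 1" using nb a by (auto simp: v_def intro!: norm_le1)
      define Q where "Q = P + (\<delta>/2) *\<^sub>R v"
      define d' where "d' = norm (s_psi - Q)"
      have nv2: "norm ((\<delta>/2) *\<^sub>R v) \<le> \<delta>/2" using nv \<delta> by (simp add: mult_left_le)
      have "d0 = norm ((s_psi - Q) + (\<delta>/2) *\<^sub>R v)" by (simp add: d0_def Q_def P_def algebra_simps)
      also have "\<dots> \<le> d' + norm ((\<delta>/2) *\<^sub>R v)" unfolding d'_def by (rule norm_triangle_ineq)
      finally have d'lo: "d0 - \<delta>/2 \<le> d'" using nv2 by simp
      have "d' = norm ((s_psi - P) - (\<delta>/2) *\<^sub>R v)" by (simp add: d'_def Q_def algebra_simps)
      also have "\<dots> \<le> norm (s_psi - P) + norm ((\<delta>/2) *\<^sub>R v)" by (rule norm_triangle_ineq4)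
      finally have d'hi: "d' \<le> d0 + \<delta>/2" using nv2 by (simp add: d0_def P_def)
      have d'pos: "\<delta>/2 \<le> d'" "0 < d'" using d'lo \<delta> by auto
      define e where "e = (1/d') *\<^sub>R (s_psi - Q)"
      have ne: "norm e = 1" using d'pos by (simp add: e_def d'_def)
      have Qe: "Q + d' *\<^sub>R e = s_psi" using d'pos by (simp add: e_def)
      define \<phi> where "\<phi> \<sigma> = \<delta>/2 - (max 0 (\<delta> - \<sigma>))\<^sup>2 / (2*\<delta>)" for \<sigma>
      define \<phi>' where "\<phi>' \<sigma> = max 0 (\<delta> - \<sigma>) / \<delta>" for \<sigma>
      have \<phi>d: "(\<phi> has_real_derivative \<phi>' \<sigma>) (at \<sigma>)" for \<sigma>
      proof -
        have "((\<lambda>\<sigma>. \<delta> - \<sigma>) has_real_derivative 0 - 1) (at \<sigma>)"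
          by (intro derivative_eq_intros) auto
        hence "((\<lambda>\<sigma>. (max 0 (\<delta> - \<sigma>))\<^sup>2) has_real_derivative 2 * max 0 (\<delta> - \<sigma>) * (0 - 1)) (at \<sigma>)"
          by (rule DERIV_chain2[OF maxsq_deriv])
        hence "((\<lambda>\<sigma>. \<delta>/2 - (max 0 (\<delta> - \<sigma>))\<^sup>2 / (2*\<delta>)) has_real_derivative
                 0 - 2 * max 0 (\<delta> - \<sigma>) * (0 - 1) / (2*\<delta>)) (at \<sigma>)"
          by (intro DERIV_diff DERIV_const DERIV_cdivide)
        thus ?thesis using \<delta> by (simp add: \<phi>_def[abs_def] \<phi>'_def)
      qed
      have \<phi>'01: "0 \<le> \<phi>' \<sigma>" "\<phi>' \<sigma> \<le> 1" if "0 \<le> \<sigma>" for \<sigma>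
        using that \<delta> by (auto simp: \<phi>'_def max_def divide_le_eq)
      have \<phi>0: "\<phi> 0 = 0" using \<delta> by (simp add: \<phi>_def power2_eq_square)
      have \<phi>'0: "\<phi>' 0 = 1" using \<delta> by (simp add: \<phi>'_def)
      define c where "c \<sigma> = P + \<phi> \<sigma> *\<^sub>R v + (\<sigma> - \<phi> \<sigma>) *\<^sub>R e" for \<sigma>
      define c' where "c' \<sigma> = \<phi>' \<sigma> *\<^sub>R v + (1 - \<phi>' \<sigma>) *\<^sub>R e" for \<sigma>
      have cd: "(c has_vector_derivative c' \<sigma>) (at \<sigma>)" for \<sigma>
      proof -
        have d1: "((\<lambda>\<sigma>. \<sigma> - \<phi> \<sigma>) has_real_derivative 1 - \<phi>' \<sigma>) (at \<sigma>)"
          by (rule DERIV_diff[OF DERIV_ident \<phi>d])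
        have "((\<lambda>\<sigma>. P + \<phi> \<sigma> *\<^sub>R v + (\<sigma> - \<phi> \<sigma>) *\<^sub>R e) has_vector_derivative
                0 + (\<phi> \<sigma> *\<^sub>R 0 + \<phi>' \<sigma> *\<^sub>R v) + ((\<sigma> - \<phi> \<sigma>) *\<^sub>R 0 + (1 - \<phi>' \<sigma>) *\<^sub>R e)) (at \<sigma>)"
          by (intro has_vector_derivative_add has_vector_derivative_const
                has_vector_derivative_scaleR \<phi>d d1)
        thus ?thesis by (simp add: c_def[abs_def] c'_def)
      qed
      define Lc where "Lc = \<delta>/2 + d'"
      have Lc: "\<delta> \<le> Lc" "0 < Lc" using d'pos \<delta> by (auto simp: Lc_def)
      have cL: "c Lc = s_psi"
      proof -
        have phiL: "\<phi> Lc = \<delta>/2" using Lc by (simp add: \<phi>_def)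
        have "c Lc = P + (\<delta>/2) *\<^sub>R v + (Lc - \<delta>/2) *\<^sub>R e" unfolding c_def phiL ..
        also have "Lc - \<delta>/2 = d'" by (simp add: Lc_def)
        also have "P + (\<delta>/2) *\<^sub>R v + d' *\<^sub>R e = Q + d' *\<^sub>R e" by (simp add: Q_def)
        finally show ?thesis using Qe by simp
      qed
      have c0: "c 0 = P" using \<phi>0 by (simp add: c_def)
      have c'0: "c' 0 = v" using \<phi>'0 by (simp add: c'_def)
      have nc': "norm (c' \<sigma>) \<le> 1" if "0 \<le> \<sigma>" for \<sigma>
      proof -
        have "norm (c' \<sigma>) \<le> norm (\<phi>' \<sigma> *\<^sub>R v) + norm ((1 - \<phi>' \<sigma>) *\<^sub>R e)"
          unfolding c'_def by (rule norm_triangle_ineq)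
        also have "\<dots> = \<phi>' \<sigma> * norm v + (1 - \<phi>' \<sigma>)" using \<phi>'01[OF that] ne by simp
        also have "\<dots> \<le> \<phi>' \<sigma> * 1 + (1 - \<phi>' \<sigma>)"
          using \<phi>'01[OF that] nv by (intro add_right_mono mult_left_mono) auto
        finally show ?thesis by simp
      qed
      define T' where "T' = a + Lc"
      define s' where "s' t = (if t \<le> a then s t else c (t - a))" for t
      define u' where "u' t = (if t \<le> a then u t else c' (t - a))" for t
      have aT': "a < T'" using Lc by (simp add: T'_def)
      have der': "\<forall>t\<in>{0..T'}. (s' has_vector_derivative u' t) (at t within {0..T'})"
      proof
        fix t assume t: "t \<in> {0..T'}"
        have d1: "(s' has_vector_derivative u' t) (at t within {0..a})"
        proof (cases "t \<le> a")
          case True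
          have "(s has_vector_derivative u t) (at t within {0..a})" using der_a True t by auto
          hence "(s' has_vector_derivative u t) (at t within {0..a})"
            by (rule has_vector_derivative_transform_within[of _ _ _ _ 1]) (use True t in \<open>auto simp: s'_def\<close>)
          thus ?thesis using True by (simp add: u'_def)
        next
          case False thus ?thesis by (intro vd_bot) auto
        qed
        have d2: "(s' has_vector_derivative u' t) (at t within {a..T'})"
        proof (cases "a \<le> t")
          case True
          have "((\<lambda>t. t - a) has_real_derivative 1 - 0) (at t)"
            by (rule DERIV_diff[OF DERIV_ident DERIV_const])
          hence "((\<lambda>t. t - a) has_vector_derivative 1) (at t)"
            by (simp add: has_real_derivative_iff_has_vector_derivative)
          hence f: "((\<lambda>t. t - a) has_vector_derivative 1) (at t within {a..T'})"
            by (rule has_vector_derivative_at_within)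
          have g: "(c has_vector_derivative c' (t - a)) (at ((\<lambda>t. t - a) t) within (\<lambda>t. t - a) ` {a..T'})"
            using cd[of "t - a"] by (simp add: has_vector_derivative_at_within)
          have "((c \<circ> (\<lambda>t. t - a)) has_vector_derivative 1 *\<^sub>R c' (t - a)) (at t within {a..T'})"
            by (rule vector_diff_chain_within[OF f g])
          hence "((\<lambda>t. c (t - a)) has_vector_derivative c' (t - a)) (at t within {a..T'})"
            by (simp add: o_def)
          hence "(s' has_vector_derivative c' (t - a)) (at t within {a..T'})"
            by (rule has_vector_derivative_transform_within[of _ _ _ _ 1])
               (use True t c0 in \<open>auto simp: s'_def P_def\<close>)
          moreover have "u' t = c' (t - a)" using c'0 True by (auto simp: u'_def v_def)
          ultimately show ?thesis by simp
        next
          case False thus ?thesis by (intro vd_bot) auto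
        qed
        have "{0..T'} = {0..a} \<union> {a..T'}" using a aT' by auto
        thus "(s' has_vector_derivative u' t) (at t within {0..T'})" using vd_glue[OF d1 d2] by simp
      qed
      have nb': "\<forall>t\<in>{0..T'}. (norm (u' t))\<^sup>2 \<le> 1"
      proof
        fix t assume t: "t \<in> {0..T'}"
        show "(norm (u' t))\<^sup>2 \<le> 1"
        proof (cases "t \<le> a")
          case True thus ?thesis using nb t a by (simp add: u'_def)
        next
          case False
          hence "norm (c' (t - a)) \<le> 1" using nc' by simp
          thus ?thesis using False by (simp add: u'_def power_le_one)
        qed
      qed
      have s'0: "s' 0 = s_phi" using s0 a by (simp add: s'_def)
      have s'T: "s' T' = s_psi" using aT' cL by (simp add: s'_def T'_def)
      have "integral {0..a} (\<lambda>\<tau>. hfun A B x r (s' \<tau>)) = integral {0..a} (\<lambda>\<tau>. hfun A B x r (s \<tau>))"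
        by (rule integral_cong) (simp add: s'_def)
      hence neg': "R0 + integral {0..a} (\<lambda>\<tau>. hfun A B x r (s' \<tau>)) \<le> 0" using Ga by simp
      have "T \<le> T'"
        by (rule competitor[OF opt R0 _ der' nb' s'0 s'T _ neg']) (use a aT' in auto)
      thus ?thesis using d'hi by (simp add: T'_def Lc_def)
    qed
    show ?thesis
    proof (rule ccontr)
      assume "\<not> ?thesis"
      hence lt: "a + d0 < T" by (simp add: d0_def)
      define \<delta> where "\<delta> = min d0 ((T - a - d0)/2)"
      have "\<delta> \<le> (T - a - d0)/2" unfolding \<delta>_def by (rule min.cobounded2)
      moreover have "\<delta> \<le> d0" unfolding \<delta>_def by (rule min.cobounded1)
      moreover have "0 < \<delta>" using d0 lt by (simp add: \<delta>_def)
      ultimately have h1: "T \<le> a + d0 + \<delta>" and h2: "\<delta> \<le> (T - a - d0) / 2" using key[of \<delta>] by auto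
      from h1 have "T - a - d0 \<le> \<delta>" by simp
      also note h2
      finally have "T - a - d0 \<le> (T - a - d0) / 2" .
      hence "T - a - d0 \<le> 0" by simp
      thus False using lt by simp
    qed
  qed
qed

lemma hfun_bound: "\<bar>hfun A B x r y\<bar> \<le> \<bar>A\<bar> + \<bar>B\<bar>"
proof -
  have "\<bar>B * sens_p x r y\<bar> \<le> \<bar>B\<bar>"
    using sens_p_bounds[of x r y] by (simp add: abs_mult mult_left_le)
  thus ?thesis unfolding hfun_def by linarith
qed

lemma hfun_lip:
  assumes r: "0 < r" and ny: "norm (y - x) \<le> K" and nz: "norm (z - x) \<le> K"
  shows "\<bar>hfun A B x r y - hfun A B x r z\<bar> \<le> \<bar>B\<bar> * (2 * K * norm (y - z)) / r\<^sup>2"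
proof -
  define a where "a = norm (y - x)"
  define b where "b = norm (z - x)"
  have "\<bar>sens_p x r y - sens_p x r z\<bar> \<le> \<bar>(1 - a\<^sup>2 / r\<^sup>2) - (1 - b\<^sup>2 / r\<^sup>2)\<bar>"
    unfolding sens_p_def a_def b_def by (auto simp: max_def)
  also have "(1 - a\<^sup>2 / r\<^sup>2) - (1 - b\<^sup>2 / r\<^sup>2) = (b - a) * (b + a) / r\<^sup>2"
    using r by (simp add: field_simps power2_eq_square)
  also have "\<bar>(b - a) * (b + a) / r\<^sup>2\<bar> = \<bar>b - a\<bar> * (b + a) / r\<^sup>2"
    by (simp add: abs_mult a_def b_def)
  also have "\<dots> \<le> norm (y - z) * (2 * K) / r\<^sup>2"
  proof -
    have "\<bar>b - a\<bar> \<le> norm ((z - x) - (y - x))" unfolding a_def b_def by (rule norm_triangle_ineq3)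
    also have "(z - x) - (y - x) = -(y - z)" by simp
    finally have ba: "\<bar>b - a\<bar> \<le> norm (y - z)" by (simp add: norm_minus_commute)
    have "b + a \<le> 2 * K" using ny nz by (simp add: a_def b_def)
    hence "\<bar>b - a\<bar> * (b + a) \<le> norm (y - z) * (2 * K)"
      using ba by (intro mult_mono) (auto simp: a_def b_def)
    thus ?thesis using r by (simp add: divide_right_mono)
  qed
  finally have sp: "\<bar>sens_p x r y - sens_p x r z\<bar> \<le> norm (y - z) * (2 * K) / r\<^sup>2" .
  have "\<bar>hfun A B x r y - hfun A B x r z\<bar> = \<bar>B\<bar> * \<bar>sens_p x r y - sens_p x r z\<bar>"
    by (simp add: hfun_def abs_mult[symmetric] right_diff_distrib abs_minus_commute)
  also have "\<dots> \<le> \<bar>B\<bar> * (norm (y - z) * (2 * K) / r\<^sup>2)"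
    using sp by (intro mult_left_mono) auto
  finally show ?thesis by (simp add: mult.commute mult.left_commute)
qed

lemma global:
  fixes s u :: "real \<Rightarrow> pt"
  assumes opt: "draining_optimal A B x r s_phi s_psi R0 T u s R" and R0: "0 \<le> R0" and r: "0 < r"
    and DT: "norm (s_psi - s_phi) < T" and t0: "t0 \<in> {0..T}"
    and Gneg: "R0 + integral {0..t0} (\<lambda>\<tau>. hfun A B x r (s \<tau>)) < 0"
  shows False
proof -
  have feas: "draining_feasible A B x r s_phi s_psi R0 T u s R"
    using opt by (simp add: draining_optimal_def)
  hence der: "\<forall>t\<in>{0..T}. (s has_vector_derivative u t) (at t within {0..T})"
    and nb: "\<forall>t\<in>{0..T}. (norm (u t))\<^sup>2 \<le> 1" and s0: "s 0 = s_phi" and sT: "s T = s_psi"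
    unfolding draining_feasible_def by auto
  have sp: "norm (s b - s a) \<le> b - a" if "0 \<le> a" "a \<le> b" "b \<le> T" for a b
    using speed[OF der nb that] .
  have scs: "continuous_on {0..T} s" by (rule scont[OF der])
  define D where "D = norm (s_psi - s_phi)"
  have D0: "0 \<le> D" by (simp add: D_def)
  have Tpos: "0 < T" using DT D0 D_def by linarith
  define q where "q = D / T"
  have q0: "0 \<le> q" and q1: "q < 1" using D0 Tpos DT by (auto simp: q_def D_def)
  define K where "K = norm (s_phi - x) + T"
  have sK: "norm (s t - x) \<le> K" if "t \<in> {0..T}" for t
  proof -
    have "norm (s t - x) = norm ((s t - s 0) + (s 0 - x))" by simp
    also have "\<dots> \<le> norm (s t - s 0) + norm (s 0 - x)" by (rule norm_triangle_ineq)
    also have "norm (s t - s 0) \<le> t - 0" using sp[of 0 t] that by auto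
    finally show ?thesis using that s0 by (simp add: K_def)
  qed
  define lin where "lin t = s_phi + (t / T) *\<^sub>R (s_psi - s_phi)" for t
  have lK: "norm (lin t - x) \<le> K" if "t \<in> {0..T}" for t
  proof -
    have "norm (lin t - x) = norm ((s_phi - x) + (t / T) *\<^sub>R (s_psi - s_phi))" by (simp add: lin_def algebra_simps)
    also have "\<dots> \<le> norm (s_phi - x) + norm ((t / T) *\<^sub>R (s_psi - s_phi))" by (rule norm_triangle_ineq)
    also have "norm ((t / T) *\<^sub>R (s_psi - s_phi)) = (t / T) * D" using that Tpos by (simp add: D_def)
    also have "(t / T) * D \<le> 1 * T" using that Tpos D0 DT D_def by (intro mult_mono) (auto simp: divide_le_eq)
    finally show ?thesis by (simp add: K_def)
  qed
  have K0: "0 \<le> K" using Tpos by (simp add: K_def)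
  define Cl where "Cl = \<bar>B\<bar> * (2 * K * (2 * K)) / r\<^sup>2"
  define Hb where "Hb = \<bar>A\<bar> + \<bar>B\<bar>"
  have Cl0: "0 \<le> Cl" and Hb0: "0 \<le> Hb" using K0 by (auto simp: Cl_def Hb_def)
  define C1 where "C1 = (1 - q) * t0 * Hb + t0 * Cl"
  have C10: "0 \<le> C1" using q1 t0 Hb0 Cl0 by (auto simp: C1_def)
  define g0 where "g0 = R0 + integral {0..t0} (\<lambda>\<tau>. hfun A B x r (s \<tau>))"
  have g0: "g0 < 0" using Gneg by (simp add: g0_def)
  define lam where "lam = min (1/2) ((- g0) / (C1 + 1))"
  have lam1: "lam \<le> 1/2" unfolding lam_def by (rule min.cobounded1)
  have lam2: "lam \<le> (- g0) / (C1 + 1)" unfolding lam_def by (rule min.cobounded2)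
  have lam0: "0 < lam" using g0 C10 by (simp add: lam_def divide_neg_pos)
  have c1p: "0 < C1 + 1" using C10 by simp
  have "lam * (C1 + 1) \<le> - g0" using lam2 pos_le_divide_eq[OF c1p] by blast
  hence lamC: "lam * C1 < - g0" using lam0 by (simp add: algebra_simps)
  define \<kappa> where "\<kappa> = 1 - lam * (1 - q)"
  have kap_eq: "(1 - lam) + lam * q = \<kappa>" by (simp add: \<kappa>_def algebra_simps)
  have kap0: "0 < \<kappa>" and kap1: "\<kappa> < 1"
  proof -
    have "lam * (1 - q) \<le> 1/2 * 1" using lam0 lam1 q0 q1 by (intro mult_mono) auto
    thus "0 < \<kappa>" by (simp add: \<kappa>_def)
    show "\<kappa> < 1" using mult_pos_pos[OF lam0, of "1 - q"] q1 by (simp add: \<kappa>_def)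
  qed
  define w where "w t = (1 - lam) *\<^sub>R s t + lam *\<^sub>R lin t" for t
  define s' where "s' \<sigma> = w (\<sigma> / \<kappa>)" for \<sigma>
  define u' where "u' \<sigma> = (1/\<kappa>) *\<^sub>R ((1 - lam) *\<^sub>R u (\<sigma>/\<kappa>) + (lam / T) *\<^sub>R (s_psi - s_phi))" for \<sigma>
  define T' where "T' = \<kappa> * T"
  have T'0: "0 \<le> T'" using kap0 Tpos by (simp add: T'_def)
  have img: "(\<lambda>\<sigma>. \<sigma> / \<kappa>) ` {0..T'} \<subseteq> {0..T}"
    using kap0 by (auto simp: T'_def divide_le_eq)
  have der': "\<forall>\<sigma>\<in>{0..T'}. (s' has_vector_derivative u' \<sigma>) (at \<sigma> within {0..T'})"
  proof
    fix \<sigma> assume \<sigma>: "\<sigma> \<in> {0..T'}"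
    define t where "t = \<sigma> / \<kappa>"
    have t: "t \<in> {0..T}" using img \<sigma> unfolding t_def image_subset_iff by blast
    have ld: "((\<lambda>t. t / T) has_real_derivative 1 / T) (at t within {0..T})"
      using DERIV_cdivide[OF DERIV_ident, of T] by (simp add: has_field_derivative_at_within)
    have "(lin has_vector_derivative 0 + ((t / T) *\<^sub>R 0 + (1 / T) *\<^sub>R (s_psi - s_phi))) (at t within {0..T})"
      unfolding lin_def[abs_def]
      by (intro has_vector_derivative_add has_vector_derivative_const has_vector_derivative_scaleR ld)
    hence lind: "(lin has_vector_derivative (1 / T) *\<^sub>R (s_psi - s_phi)) (at t within {0..T})" by simp
    have "(w has_vector_derivative ((1 - lam) *\<^sub>R u t + 0 *\<^sub>R s t) + (lam *\<^sub>R ((1 / T) *\<^sub>R (s_psi - s_phi)) + 0 *\<^sub>R lin t))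
            (at t within {0..T})"
      unfolding w_def[abs_def]
      by (intro has_vector_derivative_add has_vector_derivative_scaleR DERIV_const lind) (use der t in auto)
    hence wd: "(w has_vector_derivative ((1 - lam) *\<^sub>R u t + (lam / T) *\<^sub>R (s_psi - s_phi))) (at t within {0..T})"
      by simp
    have "((\<lambda>\<sigma>. \<sigma> / \<kappa>) has_real_derivative 1 / \<kappa>) (at \<sigma>)"
      using DERIV_cdivide[OF DERIV_ident, of \<kappa>] by simp
    hence fd: "((\<lambda>\<sigma>. \<sigma> / \<kappa>) has_vector_derivative 1 / \<kappa>) (at \<sigma> within {0..T'})"
      by (simp add: has_real_derivative_iff_has_vector_derivative has_vector_derivative_at_within)
    have gd: "(w has_vector_derivative ((1 - lam) *\<^sub>R u t + (lam / T) *\<^sub>R (s_psi - s_phi)))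
               (at ((\<lambda>\<sigma>. \<sigma> / \<kappa>) \<sigma>) within (\<lambda>\<sigma>. \<sigma> / \<kappa>) ` {0..T'})"
      using has_vector_derivative_within_subset[OF wd img] by (simp add: t_def)
    have "((w \<circ> (\<lambda>\<sigma>. \<sigma> / \<kappa>)) has_vector_derivative (1 / \<kappa>) *\<^sub>R ((1 - lam) *\<^sub>R u t + (lam / T) *\<^sub>R (s_psi - s_phi)))
            (at \<sigma> within {0..T'})"
      by (rule vector_diff_chain_within[OF fd gd])
    thus "(s' has_vector_derivative u' \<sigma>) (at \<sigma> within {0..T'})"
      by (simp add: o_def s'_def[abs_def] u'_def t_def)
  qed
  have nb': "\<forall>\<sigma>\<in>{0..T'}. (norm (u' \<sigma>))\<^sup>2 \<le> 1"
  proof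
    fix \<sigma> assume \<sigma>: "\<sigma> \<in> {0..T'}"
    define t where "t = \<sigma> / \<kappa>"
    have t: "t \<in> {0..T}" using img \<sigma> unfolding t_def image_subset_iff by blast
    have nu: "norm (u t) \<le> 1" using nb t by (auto intro!: norm_le1)
    have "norm ((1 - lam) *\<^sub>R u t + (lam / T) *\<^sub>R (s_psi - s_phi))
          \<le> norm ((1 - lam) *\<^sub>R u t) + norm ((lam / T) *\<^sub>R (s_psi - s_phi))" by (rule norm_triangle_ineq)
    also have "\<dots> = (1 - lam) * norm (u t) + lam * q"
      using lam0 lam1 Tpos by (simp add: q_def D_def)
    also have "\<dots> \<le> (1 - lam) * 1 + lam * q" using lam1 nu by (intro add_right_mono mult_left_mono) auto
    also have "\<dots> = \<kappa>" using kap_eq by simp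
    finally have "norm ((1 - lam) *\<^sub>R u t + (lam / T) *\<^sub>R (s_psi - s_phi)) \<le> \<kappa>" .
    hence "norm (u' \<sigma>) \<le> 1" using kap0 by (simp add: u'_def t_def divide_le_eq)
    thus "(norm (u' \<sigma>))\<^sup>2 \<le> 1" by (simp add: power_le_one)
  qed
  have s'0: "s' 0 = s_phi" using s0 by (simp add: s'_def w_def lin_def algebra_simps)
  have s'T: "s' T' = s_psi"
  proof -
    have "T' / \<kappa> = T" using kap0 by (simp add: T'_def)
    moreover have "lin T = s_psi" using Tpos by (simp add: lin_def)
    ultimately show ?thesis using sT by (simp add: s'_def w_def algebra_simps)
  qed
  define t0' where "t0' = \<kappa> * t0"
  have t0': "t0' \<in> {0..T'}" using t0 kap0 by (auto simp: t0'_def T'_def)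
  define hw where "hw t = hfun A B x r (w t)" for t
  have wcont: "continuous_on {0..T} w"
    unfolding w_def[abs_def] lin_def[abs_def] using Tpos by (intro continuous_intros scs) auto
  have hwi: "hw integrable_on {0..t0}"
    unfolding hw_def
    by (rule integrable_continuous_interval, rule hfun_cont, rule continuous_on_subset[OF wcont]) (use t0 in auto)
  have "((\<lambda>\<sigma>. hw ((1/\<kappa>) *\<^sub>R \<sigma> + 0)) has_integral (1 / \<bar>1/\<kappa>\<bar> ^ DIM(real)) *\<^sub>R integral {0..t0} hw)
          ((\<lambda>\<sigma>. (1 / (1/\<kappa>)) *\<^sub>R \<sigma> + - ((1 / (1/\<kappa>)) *\<^sub>R 0)) ` cbox 0 t0)"
    by (rule has_integral_affinity) (use hwi kap0 in \<open>auto simp: cbox_interval integrable_integral\<close>)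
  moreover have "(\<lambda>\<sigma>. (1 / (1/\<kappa>)) *\<^sub>R \<sigma> + - ((1 / (1/\<kappa>)) *\<^sub>R 0)) ` cbox 0 t0 = {0..t0'}"
  proof -
    have "(\<lambda>\<sigma>. (1 / (1/\<kappa>)) *\<^sub>R \<sigma> + - ((1 / (1/\<kappa>)) *\<^sub>R 0)) = (\<lambda>\<sigma>. \<kappa> * \<sigma> + 0)" by auto
    thus ?thesis using image_affinity_atLeastAtMost[of \<kappa> 0 0 t0] kap0 t0
      by (simp add: cbox_interval t0'_def)
  qed
  ultimately have "((\<lambda>\<sigma>. hfun A B x r (s' \<sigma>)) has_integral \<kappa> * integral {0..t0} hw) {0..t0'}"
    using kap0 by (simp add: hw_def s'_def divide_inverse mult.commute)
  hence Ieq: "integral {0..t0'} (\<lambda>\<sigma>. hfun A B x r (s' \<sigma>)) = \<kappa> * integral {0..t0} hw"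
    by (rule integral_unique)
  define Iw where "Iw = integral {0..t0} hw"
  define Is where "Is = integral {0..t0} (\<lambda>\<tau>. hfun A B x r (s \<tau>))"
  have hsi: "(\<lambda>\<tau>. hfun A B x r (s \<tau>)) integrable_on {0..t0}"
    by (rule integrable_continuous_interval, rule hfun_cont, rule continuous_on_subset[OF scs]) (use t0 in auto)
  have pw: "hw t \<le> hfun A B x r (s t) + lam * Cl" if t: "t \<in> {0..t0}" for t
  proof -
    have tT: "t \<in> {0..T}" using t t0 by auto
    have "w t - x = (1 - lam) *\<^sub>R (s t - x) + lam *\<^sub>R (lin t - x)" by (simp add: w_def algebra_simps)
    hence "norm (w t - x) \<le> norm ((1 - lam) *\<^sub>R (s t - x)) + norm (lam *\<^sub>R (lin t - x))"
      using norm_triangle_ineq by metis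
    also have "\<dots> = (1 - lam) * norm (s t - x) + lam * norm (lin t - x)" using lam0 lam1 by simp
    also have "\<dots> \<le> (1 - lam) * K + lam * K"
      using sK[OF tT] lK[OF tT] lam0 lam1 by (intro add_mono mult_left_mono) auto
    finally have nw: "norm (w t - x) \<le> K" by (simp add: algebra_simps)
    have "w t - s t = lam *\<^sub>R (lin t - s t)" by (simp add: w_def algebra_simps)
    hence "norm (w t - s t) = lam * norm (lin t - s t)" using lam0 by simp
    also have "norm (lin t - s t) \<le> norm (lin t - x) + norm (s t - x)"
      using norm_triangle_ineq4[of "lin t - x" "s t - x"] by simp
    also have "\<dots> \<le> 2 * K" using sK[OF tT] lK[OF tT] by simp
    finally have nws: "norm (w t - s t) \<le> lam * (2 * K)" using lam0 by simp
    have "\<bar>hw t - hfun A B x r (s t)\<bar> \<le> \<bar>B\<bar> * (2 * K * norm (w t - s t)) / r\<^sup>2"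
      unfolding hw_def by (rule hfun_lip[OF r nw sK[OF tT]])
    also have "\<dots> \<le> \<bar>B\<bar> * (2 * K * (lam * (2 * K))) / r\<^sup>2"
      using nws K0 r by (intro divide_right_mono mult_left_mono) auto
    also have "\<dots> = lam * Cl" by (simp add: Cl_def)
    finally show ?thesis by linarith
  qed
  have "Iw \<le> integral {0..t0} (\<lambda>t. hfun A B x r (s t) + lam * Cl)"
    unfolding Iw_def by (rule integral_le[OF hwi]) (use hsi pw in \<open>auto intro!: integrable_add integrable_const_ivl\<close>)
  also have "\<dots> = Is + t0 * (lam * Cl)"
    using hsi t0 by (simp add: Is_def integral_add integrable_const_ivl)
  finally have I1: "Iw \<le> Is + t0 * (lam * Cl)" .
  have hb: "- Hb \<le> hfun A B x r y" for y
    using hfun_bound[of A B x r y] unfolding Hb_def by linarith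
  have "integral {0..t0} (\<lambda>t. - Hb) \<le> Iw"
    unfolding Iw_def by (rule integral_le[OF _ hwi]) (use hb in \<open>auto simp: hw_def intro!: integrable_const_ivl\<close>)
  hence I2: "- Iw \<le> t0 * Hb" using t0 by simp
  have "\<kappa> * Iw = Iw + (lam * (1 - q)) * (- Iw)" by (simp add: \<kappa>_def algebra_simps)
  also have "\<dots> \<le> Iw + (lam * (1 - q)) * (t0 * Hb)"
    using I2 lam0 q1 by (intro add_left_mono mult_left_mono) auto
  finally have I3: "\<kappa> * Iw \<le> Iw + lam * (1 - q) * t0 * Hb" by simp
  have "R0 + integral {0..t0'} (\<lambda>\<sigma>. hfun A B x r (s' \<sigma>)) = R0 + \<kappa> * Iw" using Ieq by (simp add: Iw_def)
  also have "\<dots> \<le> R0 + Is + t0 * (lam * Cl) + lam * (1 - q) * t0 * Hb" using I1 I3 by linarith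
  also have "\<dots> = g0 + lam * C1" by (simp add: g0_def Is_def C1_def algebra_simps)
  finally have neg': "R0 + integral {0..t0'} (\<lambda>\<sigma>. hfun A B x r (s' \<sigma>)) \<le> 0" using lamC by linarith
  have "T \<le> T'" by (rule competitor[OF opt R0 T'0 der' nb' s'0 s'T t0' neg'])
  thus False using kap1 Tpos by (simp add: T'_def)
qed

lemma norm_sq_line:
  fixes P e :: pt
  shows "(norm (P + \<tau> *\<^sub>R e))\<^sup>2 = (norm P)\<^sup>2 + 2 * \<tau> * (P \<bullet> e) + \<tau>\<^sup>2 * (norm e)\<^sup>2"
  unfolding power2_norm_eq_inner by (simp add: inner_add_left inner_add_right inner_commute algebra_simps power2_eq_square)

lemma midpoint_strict:
  fixes y1 y2 :: pt
  assumes "norm y1 \<le> r" "norm y2 \<le> r" "y1 \<noteq> y2"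
  shows "norm ((1/2) *\<^sub>R (y1 + y2)) < r"
proof -
  have par: "(norm (y1 + y2))\<^sup>2 + (norm (y1 - y2))\<^sup>2 = 2 * ((norm y1)\<^sup>2 + (norm y2)\<^sup>2)"
    by (simp add: power2_norm_eq_inner inner_add_left inner_add_right inner_diff_left inner_diff_right
        inner_commute algebra_simps)
  have r0: "0 \<le> r" using assms(1) norm_ge_zero order_trans by blast
  have "(norm y1)\<^sup>2 \<le> r\<^sup>2" "(norm y2)\<^sup>2 \<le> r\<^sup>2" using assms by (auto intro: power_mono)
  moreover have "0 < (norm (y1 - y2))\<^sup>2" using assms(3) by simp
  ultimately have "(norm (y1 + y2))\<^sup>2 < 4 * r\<^sup>2"
  proof -
    assume a1: "(norm y1)\<^sup>2 \<le> r\<^sup>2" and a2: "(norm y2)\<^sup>2 \<le> r\<^sup>2" and a3: "0 < (norm (y1 - y2))\<^sup>2"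
    have "(norm (y1 + y2))\<^sup>2 = 2 * ((norm y1)\<^sup>2 + (norm y2)\<^sup>2) - (norm (y1 - y2))\<^sup>2"
      using par by (simp add: algebra_simps)
    also have "\<dots> < 2 * ((norm y1)\<^sup>2 + (norm y2)\<^sup>2)" using a3 by simp
    also have "\<dots> \<le> 2 * (r\<^sup>2 + r\<^sup>2)" using a1 a2 by simp
    finally show ?thesis by simp
  qed
  hence "(norm (y1 + y2))\<^sup>2 < (2 * r)\<^sup>2" by (simp add: power_mult_distrib)
  hence "norm (y1 + y2) < 2 * r" by (rule power2_less_imp_less) (use r0 in simp)
  thus ?thesis by simp
qed

lemma sens_p_pos:
  assumes "0 < sens_p x r y" shows "sens_p x r y = 1 - (norm (y - x))\<^sup>2 / r\<^sup>2"
  using assms by (auto simp: sens_p_def max_def split: if_splits)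

lemma sens_p_zero:
  assumes "sens_p x r y = 0" "0 < r" shows "r \<le> norm (y - x)"
proof -
  have "1 - (norm (y - x))\<^sup>2 / r\<^sup>2 \<le> 0" using assms by (auto simp: sens_p_def max_def split: if_splits)
  hence "r\<^sup>2 \<le> (norm (y - x))\<^sup>2" using assms(2) by (simp add: field_simps)
  thus ?thesis using assms(2) by (simp add: abs_le_square_iff[symmetric])
qed

lemma mid_alg: fixes a b m x :: "'a::real_vector"
  assumes "m = a + (1/2) *\<^sub>R (b - a)" shows "m - x = (1/2) *\<^sub>R ((a - x) + (b - x))"
proof -
  have "(1/2) *\<^sub>R ((a - x) + (b - x)) = (1/2) *\<^sub>R (a - x) + (1/2) *\<^sub>R (b - x)" by (rule scaleR_add_right)
  also have "\<dots> = (1/2) *\<^sub>R a + (1/2) *\<^sub>R b - ((1/2) *\<^sub>R x + (1/2) *\<^sub>R x)" by (simp add: scaleR_diff_right)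
  also have "(1/2) *\<^sub>R x + (1/2) *\<^sub>R x = x" by (simp add: scaleR_left_distrib[symmetric])
  also have "(1/2) *\<^sub>R a + (1/2) *\<^sub>R b = a + (1/2) *\<^sub>R (b - a)"
  proof -
    have "a = (1/2) *\<^sub>R a + (1/2) *\<^sub>R a" by (simp add: scaleR_left_distrib[symmetric])
    hence "a + (1/2) *\<^sub>R (b - a) = (1/2) *\<^sub>R a + (1/2) *\<^sub>R a + ((1/2) *\<^sub>R b - (1/2) *\<^sub>R a)"
      by (simp add: scaleR_diff_right)
    thus ?thesis by simp
  qed
  finally show ?thesis using assms by simp
qed

theorem corollary1:
  fixes A B r R0 T t1 t2 :: real and x s_phi s_psi :: pt
    and u s :: "real \<Rightarrow> pt" and R :: "real \<Rightarrow> real"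
  assumes "0 < r" and "A < B"
    and "norm (s_phi - x) = r" and "norm (s_psi - x) = r"
    and "0 \<le> R0"
    and "draining_optimal A B x r s_phi s_psi R0 T u s R"
    and "0 \<le> t1" and "t1 < t2" and "t2 \<le> T"
    and "\<forall>t\<in>{t1<..<t2}. R t = 0"
  shows "T = norm (s_psi - s_phi) \<and>
         (\<forall>t\<in>{0..T}. u t = (1 / T) *\<^sub>R (s_psi - s_phi))"
proof -
  note r = assms(1) and AB = assms(2) and phic = assms(3) and psic = assms(4) and R0 = assms(5)
    and opt = assms(6) and t1 = assms(7) and t12 = assms(8) and t2 = assms(9) and Rz = assms(10)
  have feas: "draining_feasible A B x r s_phi s_psi R0 T u s R"
    using opt by (simp add: draining_optimal_def)
  hence T0: "0 \<le> T"
    and der: "\<forall>t\<in>{0..T}. (s has_vector_derivative u t) (at t within {0..T})"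
    and intR: "\<forall>t\<in>{0..T}. ((\<lambda>\<tau>. f_R A B x r (R \<tau>) (s \<tau>)) has_integral (R t - R 0)) {0..t}"
    and nb: "\<forall>t\<in>{0..T}. (norm (u t))\<^sup>2 \<le> 1"
    and s0: "s 0 = s_phi" and sT: "s T = s_psi" and Rinit: "R 0 = R0"
    unfolding draining_feasible_def by auto
  have Tpos: "0 < T" using t1 t12 t2 by linarith
  have sp: "norm (s b - s a) \<le> b - a" if "0 \<le> a" "a \<le> b" "b \<le> T" for a b
    using speed[OF der nb that] .
  have scs: "continuous_on {0..T} s" by (rule scont[OF der])
  define h where "h t = hfun A B x r (s t)" for t
  have hc: "continuous_on {0..T} h" unfolding h_def by (rule hfun_cont[OF scs])
  have hi: "h integrable_on {a..b}" if "0 \<le> a" "b \<le> T" for a b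
    by (rule integrable_continuous_interval, rule continuous_on_subset[OF hc]) (use that in auto)
  define G where "G t = R0 + integral {0..t} h" for t
  have Gdiff: "G b - G a = integral {a..b} h" if "0 \<le> a" "a \<le> b" "b \<le> T" for a b
    using Henstock_Kurzweil_Integration.integral_combine[of 0 a b h] hi[of 0 b] that by (simp add: G_def)
  have GleR: "G t \<le> R t" if t: "t \<in> {0..T}" for t
  proof -
    have i1: "(h has_integral integral {0..t} h) {0..t}" using hi[of 0 t] t by (simp add: integrable_integral)
    have i2: "((\<lambda>\<tau>. f_R A B x r (R \<tau>) (s \<tau>)) has_integral (R t - R 0)) {0..t}" using intR t by auto
    have "integral {0..t} h \<le> R t - R 0"
      by (rule has_integral_le[OF i1 i2]) (auto simp: fR_hfun h_def)
    thus ?thesis using Rinit by (simp add: G_def)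
  qed
  have Gder: "(G has_real_derivative h t) (at t)" if t: "0 < t" "t < T" for t
  proof -
    have "((\<lambda>u. integral {0..u} h) has_real_derivative h t) (at t within {0..T})"
      by (rule integral_has_real_derivative[OF hc]) (use t in auto)
    hence "((\<lambda>u. integral {0..u} h) has_real_derivative h t) (at t)"
      using at_within_Icc_at[of 0 t T] t by simp
    hence "((\<lambda>u. R0 + integral {0..u} h) has_real_derivative 0 + h t) (at t)"
      by (intro derivative_eq_intros) auto
    thus ?thesis by (simp add: G_def[abs_def])
  qed
  have Gcont: "continuous_on {0..T} G"
    unfolding G_def[abs_def] by (intro continuous_intros indefinite_integral_continuous_1 hi) (use T0 in auto)
  have hzero: "h t = 0" if ab: "0 \<le> \<alpha>" "\<beta> \<le> T" and c: "\<forall>t\<in>{\<alpha><..<\<beta>}. G t = c" and t: "t \<in> {\<alpha><..<\<beta>}"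
    for \<alpha> \<beta> c t
  proof -
    have ev: "\<forall>\<^sub>F y in nhds t. G y = c"
      using eventually_nhds_in_open[OF open_greaterThanLessThan t] by eventually_elim (use c in auto)
    have "((\<lambda>_. c) has_real_derivative 0) (at t)" by simp
    hence "(G has_real_derivative 0) (at t)" using DERIV_cong_ev[OF refl ev refl] by simp
    moreover have "(G has_real_derivative h t) (at t)" using Gder t ab by auto
    ultimately show ?thesis using DERIV_unique by blast
  qed
  have DleT: "norm (s_psi - s_phi) \<le> T" using sp[of 0 T] T0 s0 sT by simp
  have tailT: "T = a + norm (s_psi - s a)" if a: "0 \<le> a" "a \<le> T" "G a \<le> 0" for a
  proof -
    have "T \<le> a + norm (s_psi - s a)"
      by (rule tail[OF opt R0 a(1,2)]) (use a(3) in \<open>simp add: G_def h_def[abs_def]\<close>)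
    moreover have "norm (s_psi - s a) \<le> T - a" using sp[of a T] a sT by simp
    ultimately show ?thesis by linarith
  qed
  have segm: "s t = s a + (t - a) *\<^sub>R ((1 / (T - a)) *\<^sub>R (s_psi - s a))"
    if a: "0 \<le> a" "a < T" "G a \<le> 0" and t: "a \<le> t" "t \<le> T" for a t
  proof -
    have eq: "norm (s T - s a) = T - a" using tailT[of a] a sT by simp
    have "s t = s a + ((t - a) / (T - a)) *\<^sub>R (s T - s a)"
      by (rule straight[OF sp a(1,2) order_refl eq t]) auto
    thus ?thesis using sT by simp
  qed
  have slack: "\<exists>t0\<in>{0..T}. G t0 < 0"
  proof (rule ccontr)
    assume "\<not> ?thesis"
    hence Gnn: "\<And>t. t \<in> {0..T} \<Longrightarrow> 0 \<le> G t" by (meson not_less)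
    have G0: "G t = 0" if "t \<in> {t1<..<t2}" for t
      using GleR[of t] Gnn[of t] Rz that t1 t2 by force
    have h0: "h t = 0" if "t \<in> {t1<..<t2}" for t
      by (rule hzero[of t1 t2 0 t]) (use t1 t2 G0 that in auto)
    define a0 where "a0 = (t1 + t2) / 2"
    have a0: "a0 \<in> {t1<..<t2}" using t12 by (simp add: a0_def)
    have ha0: "h a0 = 0" using h0 a0 by simp
    have "0 < B"
    proof (rule ccontr)
      assume "\<not> 0 < B"
      hence "h a0 \<le> A - B" using sens_p_bounds[of x r "s a0"]
        by (simp add: h_def hfun_def) (metis mult_left_mono_neg mult.commute mult_1 not_less)
      thus False using ha0 AB by linarith
    qed
    note Bpos = this
    consider "A < 0" | "0 < A" | "A = 0" by linarith
    thus False
    proof cases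
      case 1
      have "h a0 \<le> A" using sens_p_bounds[of x r "s a0"] Bpos by (simp add: h_def hfun_def)
      thus False using ha0 1 by linarith
    next
      case 2
      define hh where "hh = (t2 - a0) / 3"
      have hh: "0 < hh" using a0 by (simp add: hh_def)
      have Ga0: "G a0 \<le> 0" using G0 a0 by simp
      define e where "e = (1 / (T - a0)) *\<^sub>R (s_psi - s a0)"
      define P where "P = s a0 - x"
      have sq: "(norm (s t - x))\<^sup>2 = r\<^sup>2 * (1 - A / B)" if t: "t \<in> {t1<..<t2}" for t
      proof -
        have "B * sens_p x r (s t) = A" using h0[OF t] by (simp add: h_def hfun_def)
        hence sv: "sens_p x r (s t) = A / B" using Bpos by (simp add: field_simps)
        hence "0 < sens_p x r (s t)" using 2 Bpos by simp
        hence "sens_p x r (s t) = 1 - (norm (s t - x))\<^sup>2 / r\<^sup>2" by (rule sens_p_pos)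
        thus ?thesis using sv r by (simp add: field_simps)
      qed
      have line: "s (a0 + \<tau>) - x = P + \<tau> *\<^sub>R e" if "0 \<le> \<tau>" "a0 + \<tau> \<le> T" for \<tau>
        using segm[of a0 "a0 + \<tau>"] a0 t1 t2 Ga0 that by (simp add: P_def e_def algebra_simps)
      have pts: "a0 + k * hh \<in> {t1<..<t2}" if "k \<in> {0,1,2}" for k :: real
        using that a0 hh by (auto simp: hh_def field_simps)
      define f where "f \<tau> = (norm P)\<^sup>2 + 2 * \<tau> * (P \<bullet> e) + \<tau>\<^sup>2 * (norm e)\<^sup>2" for \<tau>
      have fv: "f (k * hh) = r\<^sup>2 * (1 - A / B)" if "k \<in> {0,1,2}" for k :: real
      proof -
        have "0 \<le> k * hh" using that hh by auto
        moreover have "a0 + k * hh \<le> T" using pts[OF that] t2 by simp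
        ultimately have "s (a0 + k * hh) - x = P + (k * hh) *\<^sub>R e" by (rule line)
        hence "f (k * hh) = (norm (s (a0 + k * hh) - x))\<^sup>2" by (simp add: f_def norm_sq_line)
        thus ?thesis using sq[OF pts[OF that]] by simp
      qed
      have f0: "f 0 = r\<^sup>2 * (1 - A / B)" using fv[of 0] by simp
      have f1: "f hh = r\<^sup>2 * (1 - A / B)" using fv[of 1] by simp
      have f2: "f (2 * hh) = r\<^sup>2 * (1 - A / B)" using fv[of 2] by simp
      have ne: "(norm e)\<^sup>2 = 1"
      proof -
        have "norm (s_psi - s a0) = T - a0" using tailT[of a0] a0 t2 Ga0 t1 by simp
        moreover have "a0 < T" using a0 t2 by simp
        ultimately show ?thesis by (simp add: e_def)
      qed
      have "2 * hh * (P \<bullet> e) + hh\<^sup>2 = 0" using f0 f1 ne by (simp add: f_def)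
      moreover have "2 * (2 * hh) * (P \<bullet> e) + (2 * hh)\<^sup>2 = 0" using f0 f2 ne by (simp add: f_def)
      moreover have "(2 * hh)\<^sup>2 = 4 * hh\<^sup>2" by (simp add: power2_eq_square)
      moreover have "2 * (2 * hh) * (P \<bullet> e) = 2 * (2 * hh * (P \<bullet> e))" by simp
      ultimately have "hh\<^sup>2 = 0" by linarith
      thus False using hh by simp
    next
      case 3
      have hle: "h t \<le> 0" for t using sens_p_bounds[of x r "s t"] Bpos 3 by (simp add: h_def hfun_def)
      have Gmono: "G b \<le> G a" if "0 \<le> a" "a \<le> b" "b \<le> T" for a b
      proof -
        have "integral {a..b} h \<le> integral {a..b} (\<lambda>_. 0)"
          by (rule integral_le) (use hi that hle in auto)
        thus ?thesis using Gdiff[OF that] by simp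
      qed
      define Z where "Z = {t \<in> {0..T}. G t = 0}"
      have Zcl: "closed Z" unfolding Z_def by (rule continuous_closed_preimage_constant[OF Gcont]) simp
      have a0Z: "a0 \<in> Z" using a0 G0 t1 t2 by (auto simp: Z_def)
      hence Zne: "Z \<noteq> {}" by auto
      have Zbdd: "bdd_below Z" by (auto simp: Z_def bdd_below_def)
      define \<tau>0 where "\<tau>0 = Inf Z"
      have \<tau>0Z: "\<tau>0 \<in> Z" unfolding \<tau>0_def by (rule closed_contains_Inf[OF Zne Zbdd Zcl])
      have \<tau>0lb: "\<tau>0 \<le> t" if "t \<in> Z" for t unfolding \<tau>0_def using that Zbdd by (rule cInf_lower)
      have \<tau>0a0: "\<tau>0 \<le> a0" using \<tau>0lb a0Z by simp
      have \<tau>0: "0 \<le> \<tau>0" "\<tau>0 < T" using \<tau>0Z \<tau>0a0 a0 t2 by (auto simp: Z_def)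
      have Gz: "G t = 0" if "\<tau>0 \<le> t" "t \<le> T" for t
        using Gmono[of \<tau>0 t] Gnn[of t] \<tau>0Z that \<tau>0 by (auto simp: Z_def)
      have hz: "h t = 0" if "t \<in> {\<tau>0<..<T}" for t
        by (rule hzero[of \<tau>0 T 0 t]) (use \<tau>0 Gz that in auto)
      have far: "r \<le> norm (s t - x)" if "t \<in> {\<tau>0<..<T}" for t
      proof (rule sens_p_zero[OF _ r])
        show "sens_p x r (s t) = 0" using hz[OF that] Bpos 3 by (simp add: h_def hfun_def)
      qed
      have near: "norm (s \<tau>0 - x) \<le> r"
      proof (cases "\<tau>0 = 0")
        case True thus ?thesis using s0 phic by simp
      next
        case False
        hence \<tau>0p: "0 < \<tau>0" using \<tau>0 by simp
        show ?thesis
        proof (rule ccontr)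
          assume "\<not> ?thesis"
          hence gt: "r < norm (s \<tau>0 - x)" by simp
          have "continuous (at \<tau>0 within {0..T}) (\<lambda>t. norm (s t - x))"
            using scs \<tau>0 unfolding continuous_on_eq_continuous_within
            by (intro continuous_intros) auto
          then obtain \<eta> where \<eta>: "\<eta> > 0"
            "\<And>t. t \<in> {0..T} \<Longrightarrow> dist t \<tau>0 < \<eta> \<Longrightarrow> dist (norm (s t - x)) (norm (s \<tau>0 - x)) < norm (s \<tau>0 - x) - r"
            using gt unfolding continuous_within_eps_delta by (meson diff_gt_0_iff_gt)
          define \<tau>1 where "\<tau>1 = max 0 (\<tau>0 - \<eta>/2)"
          have \<tau>1: "0 \<le> \<tau>1" "\<tau>1 < \<tau>0" using \<tau>0p \<eta> by (auto simp: \<tau>1_def)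
          have hz1: "h t = 0" if "t \<in> {\<tau>1..\<tau>0}" for t
          proof -
            have "dist t \<tau>0 < \<eta>" using that \<tau>1 \<eta> by (auto simp: \<tau>1_def dist_real_def)
            hence "r < norm (s t - x)" using \<eta>(2)[of t] that \<tau>1 \<tau>0 by (auto simp: dist_real_def)
            hence "sens_p x r (s t) = 0" using r by (simp add: sens_p_def max_def field_simps power_strict_mono)
            thus ?thesis using 3 by (simp add: h_def hfun_def)
          qed
          have "G \<tau>0 - G \<tau>1 = integral {\<tau>1..\<tau>0} h" using Gdiff[of \<tau>1 \<tau>0] \<tau>1 \<tau>0 by simp
          also have "\<dots> = integral {\<tau>1..\<tau>0} (\<lambda>_. 0)" by (rule integral_cong) (use hz1 in auto)
          finally have "G \<tau>1 = 0" using \<tau>0Z by (simp add: Z_def)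
          hence "\<tau>1 \<in> Z" using \<tau>1 \<tau>0 by (auto simp: Z_def)
          thus False using \<tau>0lb[of \<tau>1] \<tau>1 by simp
        qed
      qed
      have Gt0: "G \<tau>0 \<le> 0" using \<tau>0Z by (simp add: Z_def)
      have dist0: "norm (s_psi - s \<tau>0) = T - \<tau>0" using tailT[of \<tau>0] \<tau>0 Gt0 by simp
      define mt where "mt = (\<tau>0 + T) / 2"
      have mt: "mt \<in> {\<tau>0<..<T}" using \<tau>0 by (simp add: mt_def)
      have "s mt = s \<tau>0 + (mt - \<tau>0) *\<^sub>R ((1 / (T - \<tau>0)) *\<^sub>R (s_psi - s \<tau>0))"
        by (rule segm) (use \<tau>0 Gt0 mt in auto)
      also have "(mt - \<tau>0) *\<^sub>R ((1 / (T - \<tau>0)) *\<^sub>R (s_psi - s \<tau>0)) = (1/2) *\<^sub>R (s_psi - s \<tau>0)"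
        using \<tau>0 by (simp add: mt_def field_simps)
      finally have "s mt - x = (1/2) *\<^sub>R ((s \<tau>0 - x) + (s_psi - x))" by (rule mid_alg)
      moreover have "norm ((1/2) *\<^sub>R ((s \<tau>0 - x) + (s_psi - x))) < r"
      proof (rule midpoint_strict[OF near])
        show "norm (s_psi - x) \<le> r" using psic by simp
        show "s \<tau>0 - x \<noteq> s_psi - x" using dist0 \<tau>0 by auto
      qed
      ultimately show False using far[OF mt] by simp
    qed
  qed
  then obtain t0 where t0: "t0 \<in> {0..T}" "G t0 < 0" by blast
  have TD: "T = norm (s_psi - s_phi)"
  proof (rule ccontr)
    assume "T \<noteq> norm (s_psi - s_phi)"
    hence "norm (s_psi - s_phi) < T" using DleT by simp
    thus False using global[OF opt R0 r _ t0(1)] t0(2) by (simp add: G_def h_def[abs_def])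
  qed
  have sline: "s t = s_phi + (t / T) *\<^sub>R (s_psi - s_phi)" if t: "t \<in> {0..T}" for t
  proof -
    have eq: "norm (s T - s 0) = T - 0" using TD s0 sT by simp
    have "s t = s 0 + ((t - 0) / (T - 0)) *\<^sub>R (s T - s 0)"
      by (rule straight[OF sp order_refl Tpos order_refl eq]) (use t in auto)
    thus ?thesis using s0 sT by simp
  qed
  have uconst: "u t = (1 / T) *\<^sub>R (s_psi - s_phi)" if t: "t \<in> {0..T}" for t
  proof -
    have "((\<lambda>t. t / T) has_real_derivative 1 / T) (at t within {0..T})"
      using DERIV_cdivide[OF DERIV_ident, of T] by (simp add: has_field_derivative_at_within)
    hence "((\<lambda>t. s_phi + (t / T) *\<^sub>R (s_psi - s_phi)) has_vector_derivative
            0 + ((t / T) *\<^sub>R 0 + (1 / T) *\<^sub>R (s_psi - s_phi))) (at t within {0..T})"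
      by (intro has_vector_derivative_add has_vector_derivative_const has_vector_derivative_scaleR)
    hence "((\<lambda>t. s_phi + (t / T) *\<^sub>R (s_psi - s_phi)) has_vector_derivative
            (1 / T) *\<^sub>R (s_psi - s_phi)) (at t within {0..T})" by simp
    hence d1: "(s has_vector_derivative (1 / T) *\<^sub>R (s_psi - s_phi)) (at t within {0..T})"
      by (rule has_vector_derivative_transform_within[of _ _ _ _ 1]) (use t sline in auto)
    have d2: "(s has_vector_derivative u t) (at t within {0..T})" using der t by auto
    show ?thesis
      using vector_derivative_unique_within_closed_interval[of 0 T t s] Tpos t d1 d2
      by (simp add: cbox_interval)
  qed
  show ?thesis using TD uconst by simp
qed

end
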